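(* Let $H$ be a Hopf algebra with invertible antipode $S$ and let $B=A^{coH}\subseteq A$ be an $H$-Hopf–Galois extension with translation map $\tau$. Define the left coaction ${}^A\delta:A\to H\otimes A$, ${}^A\delta(a)=S^{-1}(a_{(1)})\otimes a_{(0)}$, and $$A^H\square{}^HA:=\ker(\delta^A\otimes\mathrm{id}_A-\mathrm{id}_A\otimes{}^A\delta)=\{\textstyle\sum a\otimes\tilde a\in A\otimes A:\ \sum a_{(0)}\otimes a_{(1)}\otimes\tilde a=\sum a\otimes S^{-1}(\tilde a_{(1)})\otimes\tilde a_{(0)}\}.$$ Then $A^H\square{}^HA$ coincides with $(A\otimes A)^{coH}=\{X\in A\otimes A:\delta^{A\otimes A}(X)=X\otimes 1_H\}$, where $\delta^{A\otimes A}(a\otimes\tilde a)=a_{(0)}\otimes\tilde a_{(0)}\otimes a_{(1)}\tilde a_{(1)}$, and with $\mathcal{C}:=\{\sum a\otimes\tilde a\in A\otimes A:\ \sum a_{(0)}\otimes a_{(1)}^{\langle 1\rangle}\otimes_B a_{(1)}^{\langle 2\rangle}\tilde a=\sum a\otimes\tilde a\otimes_B 1_A\}$.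
   Context: All algebras are unital and associative over $\mathbb{C}$; Sweedler notation with implicit summation is used. $A$ is a right $H$-comodule algebra with coaction $\delta^A(a)=a_{(0)}\otimes a_{(1)}$, $B=A^{coH}=\{b\in A:\delta^A(b)=b\otimes 1_H\}$. The extension is $H$-Hopf–Galois if $\chi:A\otimes_B A\to A\otimes H$, $a'\otimes_B a\mapsto a'a_{(0)}\otimes a_{(1)}$, is bijective; the translation map is $\tau(h)=\chi^{-1}(1_A\otimes h)=:h^{\langle 1\rangle}\otimes_B h^{\langle 2\rangle}$. *)

theory Defs
  imports Complex_Main
begin

class complex_vector = ab_group_add +
  fixes scaleC :: "complex \<Rightarrow> 'a \<Rightarrow> 'a"
  assumes scaleC_add_right: "scaleC a (x + y) = scaleC a x + scaleC a y"
    and scaleC_add_left: "scaleC (a + b) x = scaleC a x + scaleC b x"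
    and scaleC_scaleC: "scaleC a (scaleC b x) = scaleC (a * b) x"
    and scaleC_one: "scaleC 1 x = x"

class complex_algebra_1 = complex_vector + ring_1 +
  assumes mult_scaleC_left: "scaleC a x * y = scaleC a (x * y)"
    and mult_scaleC_right: "x * scaleC a y = scaleC a (x * y)"

instantiation complex :: complex_algebra_1
begin
definition scaleC_complex :: "complex \<Rightarrow> complex \<Rightarrow> complex" where
  "scaleC_complex a x = a * x"
instance by standard (simp_all add: scaleC_complex_def algebra_simps)
end

definition linearC :: "('v::complex_vector \<Rightarrow> 'w::complex_vector) \<Rightarrow> bool" where
  "linearC f \<longleftrightarrow> (\<forall>x y. f (x + y) = f x + f y) \<and> (\<forall>c x. f (scaleC c x) = scaleC c (f x))"

text \<open>An element of a tensor product is represented by a finite formal sum of pure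
tensors, i.e. a list of tuples (every tensor is such a sum, scalars being absorbed
into the first factor). Two formal sums denote the same tensor iff the difference of
the associated finitely supported functions on the product set lies in the complex
span of the defining (multilinearity, resp. balancing) relations. This is the usual
construction of the tensor product as the free vector space modulo relations.\<close>

definition fsum :: "'x list \<Rightarrow> 'x \<Rightarrow> complex" where
  "fsum xs = (\<lambda>p. of_nat (count_list xs p))"

definition dlt :: "'x \<Rightarrow> 'x \<Rightarrow> complex" where
  "dlt p = (\<lambda>q. if q = p then 1 else 0)"

definition csubspace :: "('x \<Rightarrow> complex) set \<Rightarrow> bool" where
  "csubspace S \<longleftrightarrow> (\<lambda>p. 0) \<in> S \<and> (\<forall>f\<in>S. \<forall>g\<in>S. (\<lambda>p. f p + g p) \<in> S)
     \<and> (\<forall>c. \<forall>f\<in>S. (\<lambda>p. c * f p) \<in> S)"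

definition cspan :: "('x \<Rightarrow> complex) set \<Rightarrow> ('x \<Rightarrow> complex) set" where
  "cspan R = \<Inter>{S. csubspace S \<and> R \<subseteq> S}"

definition teq :: "('x \<Rightarrow> complex) set \<Rightarrow> 'x list \<Rightarrow> 'x list \<Rightarrow> bool" where
  "teq R xs ys \<longleftrightarrow> (\<lambda>p. fsum xs p - fsum ys p) \<in> cspan R"

definition rel2 :: "('a::complex_vector \<times> 'b::complex_vector \<Rightarrow> complex) set" where
  "rel2 =
     {(\<lambda>p. dlt (x + x', y) p - dlt (x, y) p - dlt (x', y) p) | x x' y. True}
   \<union> {(\<lambda>p. dlt (x, y + y') p - dlt (x, y) p - dlt (x, y') p) | x y y'. True}
   \<union> {(\<lambda>p. dlt (scaleC c x, y) p - c * dlt (x, y) p) | c x y. True}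
   \<union> {(\<lambda>p. dlt (x, scaleC c y) p - c * dlt (x, y) p) | c x y. True}"

definition rel3 :: "('a::complex_vector \<times> 'b::complex_vector \<times> 'c::complex_vector \<Rightarrow> complex) set" where
  "rel3 =
     {(\<lambda>p. dlt (x + x', y, z) p - dlt (x, y, z) p - dlt (x', y, z) p) | x x' y z. True}
   \<union> {(\<lambda>p. dlt (x, y + y', z) p - dlt (x, y, z) p - dlt (x, y', z) p) | x y y' z. True}
   \<union> {(\<lambda>p. dlt (x, y, z + z') p - dlt (x, y, z) p - dlt (x, y, z') p) | x y z z'. True}
   \<union> {(\<lambda>p. dlt (scaleC c x, y, z) p - c * dlt (x, y, z) p) | c x y z. True}
   \<union> {(\<lambda>p. dlt (x, scaleC c y, z) p - c * dlt (x, y, z) p) | c x y z. True}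
   \<union> {(\<lambda>p. dlt (x, y, scaleC c z) p - c * dlt (x, y, z) p) | c x y z. True}"

definition relB2 :: "'a::complex_algebra_1 set \<Rightarrow> ('a \<times> 'a \<Rightarrow> complex) set" where
  "relB2 B = rel2 \<union> {(\<lambda>p. dlt (x * b, y) p - dlt (x, b * y) p) | x y b. b \<in> B}"

text \<open>Relations for A \<otimes> (A \<otimes>_B A).\<close>
definition relB3 :: "'a::complex_algebra_1 set \<Rightarrow> ('a \<times> 'a \<times> 'a \<Rightarrow> complex) set" where
  "relB3 B = rel3 \<union> {(\<lambda>p. dlt (z, x * b, y) p - dlt (z, x, b * y) p) | z x y b. b \<in> B}"

definition linear2 :: "('v::complex_vector \<Rightarrow> ('a::complex_vector \<times> 'b::complex_vector) list) \<Rightarrow> bool" where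
  "linear2 f \<longleftrightarrow> (\<forall>x y. teq rel2 (f (x + y)) (f x @ f y))
     \<and> (\<forall>c x. teq rel2 (f (scaleC c x)) (map (\<lambda>(u, v). (scaleC c u, v)) (f x)))"

text \<open>Hopf algebra (H, \<Delta>, \<epsilon>, S) over the complex numbers; the algebra structure is
the type class complex_algebra_1, \<Delta>(h) is given by a Sweedler representative.\<close>
definition hopf_algebra :: "('h::complex_algebra_1 \<Rightarrow> ('h \<times> 'h) list) \<Rightarrow> ('h \<Rightarrow> complex) \<Rightarrow> ('h \<Rightarrow> 'h) \<Rightarrow> bool" where
  "hopf_algebra \<Delta> \<epsilon> S \<longleftrightarrow>
     linear2 \<Delta> \<and> linearC \<epsilon> \<and> linearC S
   \<and> (\<forall>h. teq rel3 [(u, v, w). (p, w) \<leftarrow> \<Delta> h, (u, v) \<leftarrow> \<Delta> p]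
                   [(u, v, w). (u, q) \<leftarrow> \<Delta> h, (v, w) \<leftarrow> \<Delta> q])
   \<and> (\<forall>h. sum_list (map (\<lambda>(u, v). scaleC (\<epsilon> u) v) (\<Delta> h)) = h)
   \<and> (\<forall>h. sum_list (map (\<lambda>(u, v). scaleC (\<epsilon> v) u) (\<Delta> h)) = h)
   \<and> (\<forall>h k. teq rel2 (\<Delta> (h * k)) [(u * u', v * v'). (u, v) \<leftarrow> \<Delta> h, (u', v') \<leftarrow> \<Delta> k])
   \<and> teq rel2 (\<Delta> 1) [(1, 1)]
   \<and> (\<forall>h k. \<epsilon> (h * k) = \<epsilon> h * \<epsilon> k) \<and> \<epsilon> 1 = 1
   \<and> (\<forall>h. sum_list (map (\<lambda>(u, v). S u * v) (\<Delta> h)) = scaleC (\<epsilon> h) 1)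
   \<and> (\<forall>h. sum_list (map (\<lambda>(u, v). u * S v) (\<Delta> h)) = scaleC (\<epsilon> h) 1)"

text \<open>Right H-comodule algebra A with coaction \<delta>(a) = a_(0) \<otimes> a_(1).\<close>
definition comodule_algebra ::
  "('h::complex_algebra_1 \<Rightarrow> ('h \<times> 'h) list) \<Rightarrow> ('h \<Rightarrow> complex) \<Rightarrow> ('a::complex_algebra_1 \<Rightarrow> ('a \<times> 'h) list) \<Rightarrow> bool" where
  "comodule_algebra \<Delta> \<epsilon> \<delta> \<longleftrightarrow>
     linear2 \<delta>
   \<and> (\<forall>a. teq rel3 [(x, h, k). (y, k) \<leftarrow> \<delta> a, (x, h) \<leftarrow> \<delta> y]
                   [(x, h, k). (x, g) \<leftarrow> \<delta> a, (h, k) \<leftarrow> \<Delta> g])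
   \<and> (\<forall>a. sum_list (map (\<lambda>(x, h). scaleC (\<epsilon> h) x) (\<delta> a)) = a)
   \<and> (\<forall>a a'. teq rel2 (\<delta> (a * a')) [(x * y, h * k). (x, h) \<leftarrow> \<delta> a, (y, k) \<leftarrow> \<delta> a'])
   \<and> teq rel2 (\<delta> 1) [(1, 1)]"

definition coinvariants :: "('a::complex_algebra_1 \<Rightarrow> ('a \<times> 'h::complex_algebra_1) list) \<Rightarrow> 'a set" where
  "coinvariants \<delta> = {b. teq rel2 (\<delta> b) [(b, 1)]}"

definition galois_map :: "('a::complex_algebra_1 \<Rightarrow> ('a \<times> 'h::complex_algebra_1) list) \<Rightarrow> ('a \<times> 'a) list \<Rightarrow> ('a \<times> 'h) list" where
  "galois_map \<delta> X = [(a' * x, h). (a', a) \<leftarrow> X, (x, h) \<leftarrow> \<delta> a]"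

definition hopf_galois :: "('a::complex_algebra_1 \<Rightarrow> ('a \<times> 'h::complex_algebra_1) list) \<Rightarrow> bool" where
  "hopf_galois \<delta> \<longleftrightarrow>
     (\<forall>X Y. teq rel2 (galois_map \<delta> X) (galois_map \<delta> Y) \<longrightarrow> teq (relB2 (coinvariants \<delta>)) X Y)
   \<and> (\<forall>Y. \<exists>X. teq rel2 (galois_map \<delta> X) Y)"

definition translation_map :: "('a::complex_algebra_1 \<Rightarrow> ('a \<times> 'h::complex_algebra_1) list) \<Rightarrow> ('h \<Rightarrow> ('a \<times> 'a) list) \<Rightarrow> bool" where
  "translation_map \<delta> \<tau> \<longleftrightarrow> (\<forall>h. teq rel2 (galois_map \<delta> (\<tau> h)) [(1, h)])"

definition cotensor :: "('a::complex_algebra_1 \<Rightarrow> ('a \<times> 'h::complex_algebra_1) list) \<Rightarrow> ('h \<Rightarrow> 'h) \<Rightarrow> ('a \<times> 'a) list set" where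
  "cotensor \<delta> Sinv = {X. teq rel3 [(x, h, a'). (a, a') \<leftarrow> X, (x, h) \<leftarrow> \<delta> a]
                                  [(a, Sinv h, y). (a, a') \<leftarrow> X, (y, h) \<leftarrow> \<delta> a']}"

definition tensor_coinv :: "('a::complex_algebra_1 \<Rightarrow> ('a \<times> 'h::complex_algebra_1) list) \<Rightarrow> ('a \<times> 'a) list set" where
  "tensor_coinv \<delta> = {X. teq rel3 [(x, y, h * k). (a, a') \<leftarrow> X, (x, h) \<leftarrow> \<delta> a, (y, k) \<leftarrow> \<delta> a']
                                  [(a, a', 1). (a, a') \<leftarrow> X]}"

definition C_set :: "('a::complex_algebra_1 \<Rightarrow> ('a \<times> 'h::complex_algebra_1) list) \<Rightarrow> ('h \<Rightarrow> ('a \<times> 'a) list) \<Rightarrow> ('a \<times> 'a) list set" where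
  "C_set \<delta> \<tau> = {X. teq (relB3 (coinvariants \<delta>))
                      [(x, u, v * a'). (a, a') \<leftarrow> X, (x, h) \<leftarrow> \<delta> a, (u, v) \<leftarrow> \<tau> h]
                      [(a, a', 1). (a, a') \<leftarrow> X]}"

end

theory Submission
  imports Defs "HOL-Library.Function_Algebras"
begin


instantiation "fun" :: (type, complex_vector) complex_vector
begin
definition scaleC_fun :: "complex \<Rightarrow> ('a \<Rightarrow> 'b) \<Rightarrow> 'a \<Rightarrow> 'b" where
  "scaleC_fun c f = (\<lambda>x. scaleC c (f x))"
instance by standard (simp_all add: scaleC_fun_def fun_eq_iff scaleC_add_right scaleC_add_left scaleC_scaleC scaleC_one)
end

lemma scaleC_fun_apply[simp]: "scaleC c f x = scaleC c (f x)"
  by (simp add: scaleC_fun_def)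

context complex_vector begin
lemma scaleC_zero_left[simp]: "scaleC 0 x = 0"
proof -
  have "scaleC 0 x = scaleC (0+0) x" by simp
  also have "\<dots> = scaleC 0 x + scaleC 0 x" by (rule scaleC_add_left)
  finally show ?thesis by simp
qed
lemma scaleC_zero_right[simp]: "scaleC c 0 = 0"
proof -
  have "scaleC c 0 = scaleC c (0+0)" by simp
  also have "\<dots> = scaleC c 0 + scaleC c 0" by (rule scaleC_add_right)
  finally show ?thesis by simp
qed
lemma scaleC_minus_left: "scaleC (-c) x = - scaleC c x"
proof -
  have "scaleC (-c) x + scaleC c x = 0" by (simp flip: scaleC_add_left)
  then show ?thesis by (simp add: eq_neg_iff_add_eq_0)
qed
lemma scaleC_minus_right: "scaleC c (-x) = - scaleC c x"
proof -
  have "scaleC c (-x) + scaleC c x = 0" by (simp flip: scaleC_add_right)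
  then show ?thesis by (simp add: eq_neg_iff_add_eq_0)
qed
lemma scaleC_diff_left: "scaleC (a - b) x = scaleC a x - scaleC b x"
  using scaleC_add_left[of a "-b" x] by (simp add: scaleC_minus_left)
lemma scaleC_diff_right: "scaleC c (x - y) = scaleC c x - scaleC c y"
  using scaleC_add_right[of c x "-y"] by (simp add: scaleC_minus_right)
lemma scaleC_sum_list: "scaleC c (sum_list xs) = sum_list (map (scaleC c) xs)"
  by (induction xs) (simp_all add: scaleC_add_right)
lemma scaleC_sum: "scaleC c (sum f A) = sum (\<lambda>x. scaleC c (f x)) A"
  by (induction A rule: infinite_finite_induct) (simp_all add: scaleC_add_right)
lemma sum_scaleC_left: "sum (\<lambda>x. scaleC (f x) v) A = scaleC (sum f A) v"
  by (induction A rule: infinite_finite_induct) (simp_all add: scaleC_add_left)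
end

lemma scaleC_complex_eq[simp]: "scaleC a (x::complex) = a * x"
  by (simp add: scaleC_complex_def)


section \<open>Linear extensions\<close>

definition supp :: "('x \<Rightarrow> complex) \<Rightarrow> 'x set" where "supp f = {p. f p \<noteq> 0}"
definition fin :: "('x \<Rightarrow> complex) \<Rightarrow> bool" where "fin f \<longleftrightarrow> finite (supp f)"

definition lx :: "('x \<Rightarrow> 'v::complex_vector) \<Rightarrow> ('x \<Rightarrow> complex) \<Rightarrow> 'v" where
  "lx E f = (\<Sum>p\<in>supp f. scaleC (f p) (E p))"

lemma lx_T: "finite T \<Longrightarrow> supp f \<subseteq> T \<Longrightarrow> lx E f = (\<Sum>p\<in>T. scaleC (f p) (E p))"
  unfolding lx_def
  by (rule sum.mono_neutral_left) (auto simp: supp_def)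

lemma fin_add: "fin f \<Longrightarrow> fin g \<Longrightarrow> fin (f + g)"
  unfolding fin_def supp_def
  by (rule finite_subset[of _ "{p. f p \<noteq> 0} \<union> {p. g p \<noteq> 0}"]) auto
lemma fin_scale: "fin f \<Longrightarrow> fin (scaleC c f)"
  unfolding fin_def supp_def
  by (rule finite_subset[of _ "{p. f p \<noteq> 0}"]) auto
lemma fin_uminus: "fin f \<Longrightarrow> fin (- f)"
  unfolding fin_def supp_def by simp
lemma fin_diff: "fin f \<Longrightarrow> fin g \<Longrightarrow> fin (f - g)"
  using fin_add[of f "-g"] fin_uminus[of g] by simp
lemma fin_zero[simp]: "fin 0"
  unfolding fin_def supp_def by simp

lemma lx_add: assumes "fin f" "fin g" shows "lx E (f + g) = lx E f + lx E g"
proof -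
  let ?T = "supp f \<union> supp g"
  have T: "finite ?T" using assms by (simp add: fin_def)
  have "lx E (f + g) = (\<Sum>p\<in>?T. scaleC ((f+g) p) (E p))"
    by (rule lx_T[OF T]) (auto simp: supp_def)
  also have "\<dots> = (\<Sum>p\<in>?T. scaleC (f p) (E p)) + (\<Sum>p\<in>?T. scaleC (g p) (E p))"
    by (simp add: scaleC_add_left sum.distrib)
  also have "\<dots> = lx E f + lx E g"
    using lx_T[OF T, of f E] lx_T[OF T, of g E] by auto
  finally show ?thesis .
qed

lemma lx_scale: assumes "fin f" shows "lx E (scaleC c f) = scaleC c (lx E f)"
proof -
  have T: "finite (supp f)" using assms by (simp add: fin_def)
  have "lx E (scaleC c f) = (\<Sum>p\<in>supp f. scaleC ((scaleC c f) p) (E p))"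
    by (rule lx_T[OF T]) (auto simp: supp_def)
  also have "\<dots> = (\<Sum>p\<in>supp f. scaleC (c * f p) (E p))" by simp
  also have "\<dots> = scaleC c (lx E f)"
    by (simp add: lx_def scaleC_sum scaleC_scaleC)
  finally show ?thesis .
qed

lemma lx_zero[simp]: "lx E 0 = 0"
  by (simp add: lx_def supp_def)

lemma lx_uminus: assumes "fin f" shows "lx E (- f) = - lx E f"
  using lx_scale[OF assms, of E "-1"] by (simp add: scaleC_minus_left scaleC_one fun_eq_iff)

lemma lx_diff: assumes "fin f" "fin g" shows "lx E (f - g) = lx E f - lx E g"
  using lx_add[OF assms(1) fin_uminus[OF assms(2)], of E] lx_uminus[OF assms(2), of E] by simp

lemma fsum_Nil[simp]: "fsum [] = 0" by (simp add: fsum_def fun_eq_iff)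
lemma fsum_Cons: "fsum (x # xs) = dlt x + fsum xs"
  by (simp add: fsum_def dlt_def fun_eq_iff)
lemma fsum_append: "fsum (xs @ ys) = fsum xs + fsum ys"
  by (simp add: fsum_def fun_eq_iff)
lemma fsum_single: "fsum [x] = dlt x"
  by (simp add: fsum_Cons)
lemma fin_dlt[simp]: "fin (dlt p)"
  by (simp add: fin_def supp_def dlt_def)
lemma fin_fsum[simp]: "fin (fsum xs)"
proof (induction xs)
  case Nil show ?case by (simp only: fsum_Nil fin_zero)
next
  case (Cons a xs) then show ?case by (simp only: fsum_Cons) (rule fin_add, simp_all)
qed
lemma lx_dlt[simp]: "lx E (dlt p) = E p"
proof -
  have "lx E (dlt p) = (\<Sum>q\<in>{p}. scaleC (dlt p q) (E q))"
    by (rule lx_T) (auto simp: supp_def dlt_def)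
  then show ?thesis by (simp add: dlt_def scaleC_one)
qed
lemma lx_fsum: "lx E (fsum xs) = sum_list (map E xs)"
proof (induction xs)
  case Nil show ?case by (simp only: fsum_Nil lx_zero) simp
next
  case (Cons a xs) then show ?case by (simp only: fsum_Cons lx_add[OF fin_dlt fin_fsum]) simp
qed

section \<open>Spans\<close>

definition vsub :: "'v::complex_vector set \<Rightarrow> bool" where
  "vsub W \<longleftrightarrow> 0 \<in> W \<and> (\<forall>x\<in>W. \<forall>y\<in>W. x + y \<in> W) \<and> (\<forall>c. \<forall>x\<in>W. scaleC c x \<in> W)"

lemma csubspace_vsub: "csubspace S \<longleftrightarrow> vsub S"
  by (simp add: csubspace_def vsub_def zero_fun_def plus_fun_def scaleC_fun_def)

lemma vsub_Inter: "(\<And>S. S \<in> F \<Longrightarrow> vsub S) \<Longrightarrow> vsub (\<Inter>F)"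
  unfolding vsub_def by blast

lemma vsub_cspan: "vsub (cspan R)"
  unfolding cspan_def by (rule vsub_Inter) (simp add: csubspace_vsub)

lemma cspan_base: "R \<subseteq> cspan R"
  unfolding cspan_def by auto

lemma cspan_least: "vsub S \<Longrightarrow> R \<subseteq> S \<Longrightarrow> cspan R \<subseteq> S"
  unfolding cspan_def csubspace_vsub by auto

lemma cspan_mono: "R \<subseteq> R' \<Longrightarrow> cspan R \<subseteq> cspan R'"
  by (meson cspan_base cspan_least order_trans vsub_cspan)

lemma vsub_zero: "vsub W \<Longrightarrow> 0 \<in> W" by (simp add: vsub_def)
lemma vsub_add: "vsub W \<Longrightarrow> x \<in> W \<Longrightarrow> y \<in> W \<Longrightarrow> x + y \<in> W" by (simp add: vsub_def)
lemma vsub_scale: "vsub W \<Longrightarrow> x \<in> W \<Longrightarrow> scaleC c x \<in> W" by (simp add: vsub_def)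
lemma vsub_uminus: "vsub W \<Longrightarrow> x \<in> W \<Longrightarrow> - x \<in> W"
  using vsub_scale[of W x "-1"] by (simp add: scaleC_minus_left scaleC_one)
lemma vsub_diff: "vsub W \<Longrightarrow> x \<in> W \<Longrightarrow> y \<in> W \<Longrightarrow> x - y \<in> W"
  using vsub_add[of W x "-y"] vsub_uminus[of W y] by simp
lemma vsub_zeroset: "vsub {0}" by (simp add: vsub_def)

definition wd :: "('x \<Rightarrow> complex) set \<Rightarrow> ('x \<Rightarrow> 'v::complex_vector) \<Rightarrow> 'v set \<Rightarrow> bool" where
  "wd R E W \<longleftrightarrow> (\<forall>r\<in>R. fin r \<and> lx E r \<in> W)"

lemma wd_cspan: assumes "wd R E W" "vsub W" "f \<in> cspan R" shows "fin f \<and> lx E f \<in> W"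
proof -
  have "cspan R \<subseteq> {f. fin f \<and> lx E f \<in> W}"
  proof (rule cspan_least)
    show "vsub {f. fin f \<and> lx E f \<in> W}"
      using assms(2) by (auto simp: vsub_def fin_add fin_scale lx_add lx_scale)
    show "R \<subseteq> {f. fin f \<and> lx E f \<in> W}" using assms(1) by (auto simp: wd_def)
  qed
  then show ?thesis using assms(3) by auto
qed

definition ceq :: "('x \<Rightarrow> complex) set \<Rightarrow> ('x \<Rightarrow> complex) \<Rightarrow> ('x \<Rightarrow> complex) \<Rightarrow> bool" where
  "ceq R f g \<longleftrightarrow> f - g \<in> cspan R"

lemma teq_ceq: "teq R xs ys \<longleftrightarrow> ceq R (fsum xs) (fsum ys)"
proof -
  have "(\<lambda>p. fsum xs p - fsum ys p) = fsum xs - fsum ys" by (simp add: fun_eq_iff)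
  then show ?thesis by (simp add: teq_def ceq_def)
qed

lemma ceq_refl[simp]: "ceq R f f"
  by (simp add: ceq_def vsub_zero[OF vsub_cspan])
lemma ceq_sym: "ceq R f g \<Longrightarrow> ceq R g f"
  unfolding ceq_def using vsub_uminus[OF vsub_cspan] by fastforce
lemma ceq_trans: "ceq R f g \<Longrightarrow> ceq R g h \<Longrightarrow> ceq R f h"
  unfolding ceq_def using vsub_add[OF vsub_cspan, of "f - g" R "g - h"] by simp
lemma ceq_add: "ceq R f g \<Longrightarrow> ceq R f' g' \<Longrightarrow> ceq R (f + f') (g + g')"
  unfolding ceq_def using vsub_add[OF vsub_cspan, of "f - g" R "f' - g'"] by (simp add: algebra_simps)
lemma ceq_scale: "ceq R f g \<Longrightarrow> ceq R (scaleC c f) (scaleC c g)"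
  unfolding ceq_def using vsub_scale[OF vsub_cspan, of "f - g" R c] by (simp add: scaleC_diff_right)
lemma ceq_mono: "R \<subseteq> R' \<Longrightarrow> ceq R f g \<Longrightarrow> ceq R' f g"
  unfolding ceq_def using cspan_mono by blast
lemma ceq_base: "f - g \<in> R \<Longrightarrow> ceq R f g"
  unfolding ceq_def using cspan_base by blast

lemma teq_refl[simp]: "teq R xs xs" by (simp add: teq_ceq)
lemma teq_sym: "teq R xs ys \<Longrightarrow> teq R ys xs" by (simp add: teq_ceq ceq_sym)
lemma teq_trans: "teq R xs ys \<Longrightarrow> teq R ys zs \<Longrightarrow> teq R xs zs" by (meson teq_ceq ceq_trans)
lemma teq_append: "teq R xs ys \<Longrightarrow> teq R xs' ys' \<Longrightarrow> teq R (xs @ xs') (ys @ ys')"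
  by (simp add: teq_ceq fsum_append ceq_add)
lemma teq_mono: "R \<subseteq> R' \<Longrightarrow> teq R xs ys \<Longrightarrow> teq R' xs ys"
  by (simp add: teq_ceq ceq_mono)

lemma teq_concat: "(\<And>x. x \<in> set xs \<Longrightarrow> teq R (F x) (G x)) \<Longrightarrow> teq R (concat (map F xs)) (concat (map G xs))"
  by (induction xs) (simp_all add: teq_append)

lemma wd_ceq: assumes "wd R E W" "vsub W" "ceq R f g"
  shows "fin f \<Longrightarrow> fin g \<Longrightarrow> lx E f - lx E g \<in> W"
  using wd_cspan[OF assms(1,2), of "f - g"] assms(3) by (simp add: ceq_def lx_diff)

lemma wd_eval: assumes "wd R E {0}" "teq R xs ys"
  shows "sum_list (map E xs) = sum_list (map E ys)"
  using wd_ceq[OF assms(1) vsub_zeroset, of "fsum xs" "fsum ys"] assms(2)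
  by (simp add: teq_ceq lx_fsum)

lemma lx_fsum_list: "lx (\<lambda>p. fsum (F p)) (fsum xs) = fsum (concat (map F xs))"
  by (simp add: lx_fsum) (induction xs, simp_all add: fsum_append)

lemma wd_map: assumes "wd R (\<lambda>p. fsum (F p)) (cspan R')" "teq R xs ys"
  shows "teq R' (concat (map F xs)) (concat (map F ys))"
  using wd_ceq[OF assms(1) vsub_cspan, of "fsum xs" "fsum ys"] assms(2)
  by (simp add: teq_ceq lx_fsum_list ceq_def)

lemma wd_map_ceq: assumes "wd R (\<lambda>p. fsum (F p)) (cspan R')" "ceq R (fsum xs) (scaleC c (fsum ys))"
  shows "ceq R' (fsum (concat (map F xs))) (scaleC c (fsum (concat (map F ys))))"
  using wd_ceq[OF assms(1) vsub_cspan, of "fsum xs" "scaleC c (fsum ys)"] assms(2)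
  by (simp add: lx_fsum_list ceq_def fin_scale lx_scale)



lemma dlt_fsum: "dlt p = fsum [p]" by (simp add: fsum_single)

lemma gen3_eq: "(\<lambda>p. dlt a p - dlt b p - dlt c p) = dlt a - dlt b - dlt c"
  by (simp add: fun_eq_iff)
lemma gen2_eq: "(\<lambda>p. dlt a p - c * dlt b p) = dlt a - scaleC c (dlt b)"
  by (simp add: fun_eq_iff)
lemma gen1_eq: "(\<lambda>p. dlt a p - dlt b p) = dlt a - dlt b"
  by (simp add: fun_eq_iff)

lemma lx_gen3: "fin (\<lambda>p. dlt a p - dlt b p - dlt c p) \<and> lx E (\<lambda>p. dlt a p - dlt b p - dlt c p) = E a - E b - E c"
  unfolding gen3_eq by (simp add: fin_diff lx_diff)
lemma lx_gen2: "fin (\<lambda>p. dlt a p - c * dlt b p) \<and> lx E (\<lambda>p. dlt a p - c * dlt b p) = E a - scaleC c (E b)"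
  unfolding gen2_eq by (simp add: fin_diff fin_scale lx_diff lx_scale)
lemma lx_gen1: "fin (\<lambda>p. dlt a p - dlt b p) \<and> lx E (\<lambda>p. dlt a p - dlt b p) = E a - E b"
  unfolding gen1_eq by (simp add: fin_diff lx_diff)

lemma wd_rel2:
  assumes "\<And>x x' y. E (x+x',y) - E(x,y) - E(x',y) \<in> W"
    "\<And>x y y'. E (x,y+y') - E(x,y) - E(x,y') \<in> W"
    "\<And>c x y. E (scaleC c x, y) - scaleC c (E(x,y)) \<in> W"
    "\<And>c x y. E (x, scaleC c y) - scaleC c (E(x,y)) \<in> W"
  shows "wd rel2 E W"
  unfolding wd_def rel2_def using assms by (auto simp: lx_gen3 lx_gen2)

lemma wd_rel3:
  assumes "\<And>x x' y z. E (x+x',y,z) - E(x,y,z) - E(x',y,z) \<in> W"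
    "\<And>x y y' z. E (x,y+y',z) - E(x,y,z) - E(x,y',z) \<in> W"
    "\<And>x y z z'. E (x,y,z+z') - E(x,y,z) - E(x,y,z') \<in> W"
    "\<And>c x y z. E (scaleC c x, y, z) - scaleC c (E(x,y,z)) \<in> W"
    "\<And>c x y z. E (x, scaleC c y, z) - scaleC c (E(x,y,z)) \<in> W"
    "\<And>c x y z. E (x, y, scaleC c z) - scaleC c (E(x,y,z)) \<in> W"
  shows "wd rel3 E W"
  unfolding wd_def rel3_def using assms by (auto simp: lx_gen3 lx_gen2)

lemma wd_relB2:
  assumes "wd rel2 E W" "\<And>x y b. b \<in> B \<Longrightarrow> E (x*b, y) - E(x, b*y) \<in> W"
  shows "wd (relB2 B) E W"
  using assms unfolding wd_def relB2_def by (auto simp: lx_gen1)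

lemma wd_relB3:
  assumes "wd rel3 E W" "\<And>z x y b. b \<in> B \<Longrightarrow> E (z, x*b, y) - E(z, x, b*y) \<in> W"
  shows "wd (relB3 B) E W"
  using assms unfolding wd_def relB3_def by (auto simp: lx_gen1)

lemma teq_diff: "teq R xs (ys @ zs) \<Longrightarrow> fsum xs - fsum ys - fsum zs \<in> cspan R"
  by (simp add: teq_ceq ceq_def fsum_append algebra_simps)
lemma ceq_diff: "ceq R f g \<Longrightarrow> f - g \<in> cspan R"
  by (simp add: ceq_def)

lemma wdL_rel2:
  assumes "\<And>x x' y. teq R' (F (x+x',y)) (F(x,y) @ F(x',y))"
    "\<And>x y y'. teq R' (F (x,y+y')) (F(x,y) @ F(x,y'))"
    "\<And>c x y. ceq R' (fsum (F (scaleC c x, y))) (scaleC c (fsum (F(x,y))))"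
    "\<And>c x y. ceq R' (fsum (F (x, scaleC c y))) (scaleC c (fsum (F(x,y))))"
  shows "wd rel2 (\<lambda>p. fsum (F p)) (cspan R')"
  by (rule wd_rel2) (use assms in \<open>auto intro: teq_diff ceq_diff\<close>)

lemma wdL_rel3:
  assumes "\<And>x x' y z. teq R' (F (x+x',y,z)) (F(x,y,z) @ F(x',y,z))"
    "\<And>x y y' z. teq R' (F (x,y+y',z)) (F(x,y,z) @ F(x,y',z))"
    "\<And>x y z z'. teq R' (F (x,y,z+z')) (F(x,y,z) @ F(x,y,z'))"
    "\<And>c x y z. ceq R' (fsum (F (scaleC c x, y, z))) (scaleC c (fsum (F(x,y,z))))"
    "\<And>c x y z. ceq R' (fsum (F (x, scaleC c y, z))) (scaleC c (fsum (F(x,y,z))))"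
    "\<And>c x y z. ceq R' (fsum (F (x, y, scaleC c z))) (scaleC c (fsum (F(x,y,z))))"
  shows "wd rel3 (\<lambda>p. fsum (F p)) (cspan R')"
  by (rule wd_rel3) (use assms in \<open>auto intro: teq_diff ceq_diff\<close>)

lemma wdL_relB2:
  assumes "wd rel2 (\<lambda>p. fsum (F p)) (cspan R')" "\<And>x y b. b \<in> B \<Longrightarrow> teq R' (F (x*b, y)) (F(x, b*y))"
  shows "wd (relB2 B) (\<lambda>p. fsum (F p)) (cspan R')"
  by (rule wd_relB2[OF assms(1)]) (use assms(2) in \<open>auto simp: teq_ceq ceq_def\<close>)

lemma wdL_relB3:
  assumes "wd rel3 (\<lambda>p. fsum (F p)) (cspan R')" "\<And>z x y b. b \<in> B \<Longrightarrow> teq R' (F (z, x*b, y)) (F(z, x, b*y))"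
  shows "wd (relB3 B) (\<lambda>p. fsum (F p)) (cspan R')"
  by (rule wd_relB3[OF assms(1)]) (use assms(2) in \<open>auto simp: teq_ceq ceq_def\<close>)

definition bil2 :: "('a::complex_vector \<Rightarrow> 'b::complex_vector \<Rightarrow> 'v::complex_vector) \<Rightarrow> bool" where
  "bil2 g \<longleftrightarrow> (\<forall>x x' y. g (x+x') y = g x y + g x' y) \<and> (\<forall>x y y'. g x (y+y') = g x y + g x y')
     \<and> (\<forall>c x y. g (scaleC c x) y = scaleC c (g x y)) \<and> (\<forall>c x y. g x (scaleC c y) = scaleC c (g x y))"

definition tril3 :: "('a::complex_vector \<Rightarrow> 'b::complex_vector \<Rightarrow> 'c::complex_vector \<Rightarrow> 'v::complex_vector) \<Rightarrow> bool" where
  "tril3 g \<longleftrightarrow> (\<forall>x x' y z. g (x+x') y z = g x y z + g x' y z) \<and> (\<forall>x y y' z. g x (y+y') z = g x y z + g x y' z)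
     \<and> (\<forall>x y z z'. g x y (z+z') = g x y z + g x y z')
     \<and> (\<forall>c x y z. g (scaleC c x) y z = scaleC c (g x y z)) \<and> (\<forall>c x y z. g x (scaleC c y) z = scaleC c (g x y z))
     \<and> (\<forall>c x y z. g x y (scaleC c z) = scaleC c (g x y z))"

lemma wd_bil2: "bil2 g \<Longrightarrow> wd rel2 (\<lambda>(u,v). g u v) {0}"
  by (rule wd_rel2) (auto simp: bil2_def)

lemma wd_tril3: "tril3 g \<Longrightarrow> wd rel3 (\<lambda>(u,v,w). g u v w) {0}"
  by (rule wd_rel3) (auto simp: tril3_def)

lemma eval2: "bil2 g \<Longrightarrow> teq rel2 xs ys \<Longrightarrow> sum_list (map (\<lambda>(u,v). g u v) xs) = sum_list (map (\<lambda>(u,v). g u v) ys)"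
  using wd_eval wd_bil2 by blast
lemma eval3: "tril3 g \<Longrightarrow> teq rel3 xs ys \<Longrightarrow> sum_list (map (\<lambda>(u,v,w). g u v w) xs) = sum_list (map (\<lambda>(u,v,w). g u v w) ys)"
  using wd_eval wd_tril3 by blast



lemma teq_gen3: assumes "(\<lambda>p. dlt a p - dlt b p - dlt c p) \<in> R" shows "teq R [a] [b,c]"
proof -
  have "fsum [a] - fsum [b,c] = (\<lambda>p. dlt a p - dlt b p - dlt c p)" by (simp add: fsum_Cons fun_eq_iff)
  then show ?thesis unfolding teq_ceq ceq_def by (simp only:) (rule subsetD[OF cspan_base assms])
qed
lemma ceq_gen2: assumes "(\<lambda>p. dlt a p - c * dlt b p) \<in> R" shows "ceq R (fsum [a]) (scaleC c (fsum [b]))"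
proof -
  have "fsum [a] - scaleC c (fsum [b]) = (\<lambda>p. dlt a p - c * dlt b p)" by (simp add: fsum_Cons fun_eq_iff)
  then show ?thesis unfolding ceq_def by (simp only:) (rule subsetD[OF cspan_base assms])
qed
lemma teq_gen1: assumes "(\<lambda>p. dlt a p - dlt b p) \<in> R" shows "teq R [a] [b]"
proof -
  have "fsum [a] - fsum [b] = (\<lambda>p. dlt a p - dlt b p)" by (simp add: fsum_Cons fun_eq_iff)
  then show ?thesis unfolding teq_ceq ceq_def by (simp only:) (rule subsetD[OF cspan_base assms])
qed

lemma r2_add1: "teq rel2 [(x+x',y)] [(x,y),(x',y)]"
  by (rule teq_gen3) (unfold rel2_def, rule UnI1, rule UnI1, rule UnI1, rule CollectI, (rule exI)+, rule conjI[OF refl TrueI])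
lemma r2_add2: "teq rel2 [(x,y+y')] [(x,y),(x,y')]"
  by (rule teq_gen3) (unfold rel2_def, rule UnI1, rule UnI1, rule UnI2, rule CollectI, (rule exI)+, rule conjI[OF refl TrueI])
lemma r2_sc1: "ceq rel2 (fsum [(scaleC c x,y)]) (scaleC c (fsum [(x,y)]))"
  by (rule ceq_gen2) (unfold rel2_def, rule UnI1, rule UnI2, rule CollectI, (rule exI)+, rule conjI[OF refl TrueI])
lemma r2_sc2: "ceq rel2 (fsum [(x,scaleC c y)]) (scaleC c (fsum [(x,y)]))"
  by (rule ceq_gen2) (unfold rel2_def, rule UnI2, rule CollectI, (rule exI)+, rule conjI[OF refl TrueI])

lemma r3_add1: "teq rel3 [(x+x',y,z)] [(x,y,z),(x',y,z)]"
  by (rule teq_gen3) (unfold rel3_def, rule UnI1, rule UnI1, rule UnI1, rule UnI1, rule UnI1, rule CollectI, (rule exI)+, rule conjI[OF refl TrueI])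
lemma r3_add2: "teq rel3 [(x,y+y',z)] [(x,y,z),(x,y',z)]"
  by (rule teq_gen3) (unfold rel3_def, rule UnI1, rule UnI1, rule UnI1, rule UnI1, rule UnI2, rule CollectI, (rule exI)+, rule conjI[OF refl TrueI])
lemma r3_add3: "teq rel3 [(x,y,z+z')] [(x,y,z),(x,y,z')]"
  by (rule teq_gen3) (unfold rel3_def, rule UnI1, rule UnI1, rule UnI1, rule UnI2, rule CollectI, (rule exI)+, rule conjI[OF refl TrueI])
lemma r3_sc1: "ceq rel3 (fsum [(scaleC c x,y,z)]) (scaleC c (fsum [(x,y,z)]))"
  by (rule ceq_gen2) (unfold rel3_def, rule UnI1, rule UnI1, rule UnI2, rule CollectI, (rule exI)+, rule conjI[OF refl TrueI])
lemma r3_sc2: "ceq rel3 (fsum [(x,scaleC c y,z)]) (scaleC c (fsum [(x,y,z)]))"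
  by (rule ceq_gen2) (unfold rel3_def, rule UnI1, rule UnI2, rule CollectI, (rule exI)+, rule conjI[OF refl TrueI])
lemma r3_sc3: "ceq rel3 (fsum [(x,y,scaleC c z)]) (scaleC c (fsum [(x,y,z)]))"
  by (rule ceq_gen2) (unfold rel3_def, rule UnI2, rule CollectI, (rule exI)+, rule conjI[OF refl TrueI])

lemma rel2_B: "rel2 \<subseteq> relB2 B" unfolding relB2_def by (rule Un_upper1)
lemma rel3_B: "rel3 \<subseteq> relB3 B" unfolding relB3_def by (rule Un_upper1)
lemma rB2_bal: "b \<in> B \<Longrightarrow> teq (relB2 B) [(x*b,y)] [(x,b*y)]"
  by (rule teq_gen1) (unfold relB2_def, rule UnI2, blast)
lemma rB3_bal: "b \<in> B \<Longrightarrow> teq (relB3 B) [(z,x*b,y)] [(z,x,b*y)]"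
  by (rule teq_gen1) (unfold relB3_def, rule UnI2, blast)

lemma ceq_CM_add:
  assumes "\<And>p. p \<in> set xs \<Longrightarrow> ceq R (fsum (F p)) (fsum (G p) + fsum (H p))"
  shows "ceq R (fsum (concat (map F xs))) (fsum (concat (map G xs)) + fsum (concat (map H xs)))"
  using assms
proof (induction xs)
  case Nil then show ?case by simp
next
  case (Cons a xs)
  have "ceq R (fsum (F a)) (fsum (G a) + fsum (H a))" by (rule Cons.prems) simp
  moreover have "ceq R (fsum (concat (map F xs))) (fsum (concat (map G xs)) + fsum (concat (map H xs)))"
    by (rule Cons.IH) (rule Cons.prems, simp)
  ultimately have "ceq R (fsum (F a) + fsum (concat (map F xs)))
     ((fsum (G a) + fsum (H a)) + (fsum (concat (map G xs)) + fsum (concat (map H xs))))"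
    by (rule ceq_add)
  moreover have "fsum (G a) + fsum (H a) + (fsum (concat (map G xs)) + fsum (concat (map H xs)))
     = (fsum (G a) + fsum (concat (map G xs))) + (fsum (H a) + fsum (concat (map H xs)))"
    by (simp only: add_ac)
  ultimately have "ceq R (fsum (F a) + fsum (concat (map F xs)))
     ((fsum (G a) + fsum (concat (map G xs))) + (fsum (H a) + fsum (concat (map H xs))))" by simp
  then show ?case by (simp only: list.map concat.simps fsum_append)
qed

lemma ceq_CM_scale:
  assumes "\<And>p. p \<in> set xs \<Longrightarrow> ceq R (fsum (F p)) (scaleC c (fsum (G p)))"
  shows "ceq R (fsum (concat (map F xs))) (scaleC c (fsum (concat (map G xs))))"
  using assms
proof (induction xs)
  case Nil then show ?case by simp
next
  case (Cons a xs)
  have "ceq R (fsum (F a)) (scaleC c (fsum (G a)))" by (rule Cons.prems) simp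
  moreover have "ceq R (fsum (concat (map F xs))) (scaleC c (fsum (concat (map G xs))))"
    by (rule Cons.IH) (rule Cons.prems, simp)
  ultimately have "ceq R (fsum (F a) + fsum (concat (map F xs))) (scaleC c (fsum (G a)) + scaleC c (fsum (concat (map G xs))))"
    by (rule ceq_add)
  then have "ceq R (fsum (F a) + fsum (concat (map F xs))) (scaleC c (fsum (G a) + fsum (concat (map G xs))))"
    by (simp only: scaleC_add_right)
  then show ?case by (simp only: list.map concat.simps fsum_append)
qed

lemma teq_CM_add:
  assumes "\<And>p. p \<in> set xs \<Longrightarrow> teq R (F p) (G p @ H p)"
  shows "teq R (concat (map F xs)) (concat (map G xs) @ concat (map H xs))"
  using ceq_CM_add[of xs R F G H] assms by (simp add: teq_ceq fsum_append)

lemma map_CM: "map f xs = concat (map (\<lambda>p. [f p]) xs)" by (induction xs) auto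

lemma teq_map_add:
  assumes "\<And>p. p \<in> set xs \<Longrightarrow> teq R [f p] [g p, h p]"
  shows "teq R (map f xs) (map g xs @ map h xs)"
  using teq_CM_add[of xs R "\<lambda>p. [f p]" "\<lambda>p. [g p]" "\<lambda>p. [h p]"] assms
  by (simp add: map_CM[symmetric])

lemma ceq_map_scale:
  assumes "\<And>p. p \<in> set xs \<Longrightarrow> ceq R (fsum [f p]) (scaleC c (fsum [g p]))"
  shows "ceq R (fsum (map f xs)) (scaleC c (fsum (map g xs)))"
  using ceq_CM_scale[of xs R "\<lambda>p. [f p]" c "\<lambda>p. [g p]"] assms
  by (simp add: map_CM[symmetric])

lemma teq_map: "(\<And>p. p \<in> set xs \<Longrightarrow> teq R [f p] [g p]) \<Longrightarrow> teq R (map f xs) (map g xs)"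
  using teq_concat[of xs R "\<lambda>p. [f p]" "\<lambda>p. [g p]"] by (simp add: map_CM[symmetric])

lemma col3_3: "teq rel3 (map (\<lambda>z. (a,b,z)) zs) [(a,b,sum_list zs)]"
proof (induction zs)
  case Nil
  have "ceq rel3 (fsum [(a,b,scaleC 0 0)]) (scaleC 0 (fsum [(a,b,0)]))" by (rule r3_sc3)
  then show ?case by (simp add: teq_ceq) (rule ceq_sym)
next
  case (Cons z zs)
  have A: "teq rel3 ((a,b,z) # map (\<lambda>z. (a,b,z)) zs) [(a,b,z),(a,b,sum_list zs)]"
    using teq_append[OF teq_refl[of rel3 "[(a,b,z)]"] Cons.IH] by simp
  have B: "teq rel3 [(a,b,z + sum_list zs)] [(a,b,z),(a,b,sum_list zs)]" by (rule r3_add3)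
  show ?case using teq_trans[OF A teq_sym[OF B]] by simp
qed

lemma col3_2: "teq rel3 (map (\<lambda>y. (a,y,c)) ys) [(a,sum_list ys,c)]"
proof (induction ys)
  case Nil
  have "ceq rel3 (fsum [(a,scaleC 0 0,c)]) (scaleC 0 (fsum [(a,0,c)]))" by (rule r3_sc2)
  then show ?case by (simp add: teq_ceq) (rule ceq_sym)
next
  case (Cons y ys)
  have A: "teq rel3 ((a,y,c) # map (\<lambda>y. (a,y,c)) ys) [(a,y,c),(a,sum_list ys,c)]"
    using teq_append[OF teq_refl[of rel3 "[(a,y,c)]"] Cons.IH] by simp
  have B: "teq rel3 [(a,y + sum_list ys,c)] [(a,y,c),(a,sum_list ys,c)]" by (rule r3_add2)
  show ?case using teq_trans[OF A teq_sym[OF B]] by simp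
qed

lemma swap23: "teq rel3 [(a, scaleC c x, z)] [(a, x, scaleC c z)]"
  unfolding teq_ceq by (rule ceq_trans[OF r3_sc2 ceq_sym[OF r3_sc3]])
lemma swap23b: "teq rel3 [(a, x, scaleC c z)] [(a, scaleC c x, z)]"
  by (rule teq_sym[OF swap23])



lemma sum_list_case_add: fixes f g :: "'a \<Rightarrow> 'b \<Rightarrow> 'c::comm_monoid_add" shows "sum_list (map (\<lambda>(u,v). f u v + g u v) xs) = sum_list (map (\<lambda>(u,v). f u v) xs) + sum_list (map (\<lambda>(u,v). g u v) xs)"
  by (induction xs) (auto simp: add_ac)
lemma sum_list_case_scale: "sum_list (map (\<lambda>(u,v). scaleC c (f u v)) xs) = scaleC c (sum_list (map (\<lambda>(u,v). f u v) xs))"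
  by (induction xs) (auto simp: scaleC_add_right)
lemma sum_list_case_lmul: fixes f :: "'a \<Rightarrow> 'b \<Rightarrow> 'c::ring" shows "a * sum_list (map (\<lambda>(u,v). f u v) xs) = sum_list (map (\<lambda>(u,v). a * f u v) xs)"
  by (induction xs) (auto simp: distrib_left)
lemma sum_list_case_rmul: fixes f :: "'a \<Rightarrow> 'b \<Rightarrow> 'c::ring" shows "sum_list (map (\<lambda>(u,v). f u v) xs) * a = sum_list (map (\<lambda>(u,v). f u v * a) xs)"
  by (induction xs) (auto simp: distrib_right)

lemma lin_sum_list:
  fixes L :: "'a::complex_vector \<Rightarrow> 'b::complex_vector"
  assumes "\<And>x y. L (x+y) = L x + L y" shows "L (sum_list xs) = sum_list (map L xs)"
proof -
  have "L 0 = 0" using assms[of 0 0] by simp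
  then show ?thesis by (induction xs) (simp_all add: assms)
qed

locale HG =
  fixes \<Delta> :: "'h::complex_algebra_1 \<Rightarrow> ('h \<times> 'h) list"
    and \<epsilon> :: "'h \<Rightarrow> complex"
    and S Sinv :: "'h \<Rightarrow> 'h"
    and \<delta> :: "'a::complex_algebra_1 \<Rightarrow> ('a \<times> 'h) list"
    and \<tau> :: "'h \<Rightarrow> ('a \<times> 'a) list"
  assumes hopf: "hopf_algebra \<Delta> \<epsilon> S"
    and inv: "\<forall>h. S (Sinv h) = h \<and> Sinv (S h) = h"
    and com: "comodule_algebra \<Delta> \<epsilon> \<delta>"
    and gal: "hopf_galois \<delta>"
    and tr: "translation_map \<delta> \<tau>"
begin

lemma D_add: "teq rel2 (\<Delta> (x+y)) (\<Delta> x @ \<Delta> y)" using hopf by (simp add: hopf_algebra_def linear2_def)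
lemma D_scale: "teq rel2 (\<Delta> (scaleC c x)) (map (\<lambda>(u, v). (scaleC c u, v)) (\<Delta> x))"
  using hopf by (simp add: hopf_algebra_def linear2_def)
lemma e_add: "\<epsilon> (x+y) = \<epsilon> x + \<epsilon> y" using hopf by (simp add: hopf_algebra_def linearC_def)
lemma e_scale: "\<epsilon> (scaleC c x) = c * \<epsilon> x" using hopf by (simp add: hopf_algebra_def linearC_def)
lemma S_add: "S (x+y) = S x + S y" using hopf by (simp add: hopf_algebra_def linearC_def)
lemma S_scale: "S (scaleC c x) = scaleC c (S x)" using hopf by (simp add: hopf_algebra_def linearC_def)
lemma coassD: "teq rel3 [(u, v, w). (p, w) \<leftarrow> \<Delta> h, (u, v) \<leftarrow> \<Delta> p] [(u, v, w). (u, q) \<leftarrow> \<Delta> h, (v, w) \<leftarrow> \<Delta> q]"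
  using hopf by (simp add: hopf_algebra_def)
lemma counitL: "sum_list (map (\<lambda>(u, v). scaleC (\<epsilon> u) v) (\<Delta> h)) = h"
  using hopf by (simp add: hopf_algebra_def)
lemma counitR: "sum_list (map (\<lambda>(u, v). scaleC (\<epsilon> v) u) (\<Delta> h)) = h"
  using hopf by (simp add: hopf_algebra_def)
lemma D_mult: "teq rel2 (\<Delta> (h * k)) [(u * u', v * v'). (u, v) \<leftarrow> \<Delta> h, (u', v') \<leftarrow> \<Delta> k]"
  using hopf by (simp add: hopf_algebra_def)
lemma D_one: "teq rel2 (\<Delta> 1) [(1, 1)]" using hopf by (simp add: hopf_algebra_def)
lemma e_mult: "\<epsilon> (h * k) = \<epsilon> h * \<epsilon> k" using hopf by (simp add: hopf_algebra_def)
lemma e_one: "\<epsilon> 1 = 1" using hopf by (simp add: hopf_algebra_def)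
lemma antipL: "sum_list (map (\<lambda>(u, v). S u * v) (\<Delta> h)) = scaleC (\<epsilon> h) 1"
  using hopf by (simp add: hopf_algebra_def)
lemma antipR: "sum_list (map (\<lambda>(u, v). u * S v) (\<Delta> h)) = scaleC (\<epsilon> h) 1"
  using hopf by (simp add: hopf_algebra_def)
lemma S_Sinv[simp]: "S (Sinv h) = h" using inv by simp
lemma Sinv_S[simp]: "Sinv (S h) = h" using inv by simp

lemma Sinv_add: "Sinv (x+y) = Sinv x + Sinv y"
  by (metis S_add S_Sinv Sinv_S)
lemma Sinv_scale: "Sinv (scaleC c x) = scaleC c (Sinv x)"
  by (metis S_scale S_Sinv Sinv_S)

definition SL :: "'h \<Rightarrow> ('h \<Rightarrow> 'h \<Rightarrow> 'v::complex_vector) \<Rightarrow> 'v" where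
  "SL h g = sum_list (map (\<lambda>(u,v). g u v) (\<Delta> h))"

lemma SL_add_fun: "SL h (\<lambda>u v. f u v + g u v) = SL h f + SL h g"
  by (simp add: SL_def sum_list_case_add)
lemma SL_scale_fun: "SL h (\<lambda>u v. scaleC c (f u v)) = scaleC c (SL h f)"
  by (simp add: SL_def sum_list_case_scale)
lemma SL_lmul: fixes f :: "'h \<Rightarrow> 'h \<Rightarrow> 'h" shows "a * SL h f = SL h (\<lambda>u v. a * f u v)"
  by (simp add: SL_def sum_list_case_lmul)
lemma SL_rmul: fixes f :: "'h \<Rightarrow> 'h \<Rightarrow> 'h" shows "SL h f * a = SL h (\<lambda>u v. f u v * a)"
  by (simp add: SL_def sum_list_case_rmul)
lemma SL_cong: "(\<And>u v. g u v = g' u v) \<Longrightarrow> SL h g = SL h g'"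
  by (simp add: SL_def)

lemma SL_hadd: "bil2 g \<Longrightarrow> SL (x+y) g = SL x g + SL y g"
  unfolding SL_def using eval2[OF _ D_add] by simp
lemma SL_hscale: assumes "bil2 g" shows "SL (scaleC c x) g = scaleC c (SL x g)"
proof -
  have "SL (scaleC c x) g = sum_list (map (\<lambda>(u,v). g u v) (map (\<lambda>(u, v). (scaleC c u, v)) (\<Delta> x)))"
    unfolding SL_def using eval2[OF assms D_scale] by simp
  also have "\<dots> = sum_list (map (\<lambda>(u,v). scaleC c (g u v)) (\<Delta> x))"
    using assms by (simp add: bil2_def o_def case_prod_unfold)
  finally show ?thesis by (simp add: SL_def sum_list_case_scale)
qed

lemma sum_list_map_concat: "sum_list (map f (concat xss)) = sum_list (map (\<lambda>xs. sum_list (map f xs)) xss)"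
  by (induction xss) auto

lemma SL_mult: assumes "bil2 g" shows "SL (h * k) g = SL h (\<lambda>u v. SL k (\<lambda>u' v'. g (u*u') (v*v')))"
  unfolding SL_def using eval2[OF assms D_mult[of h k]]
  by (simp add: sum_list_map_concat o_def case_prod_unfold)

lemma SL_one: assumes "bil2 g" shows "SL 1 g = g 1 1"
  unfolding SL_def using eval2[OF assms D_one] by simp

lemma SL_coass: assumes "tril3 g"
  shows "SL h (\<lambda>p w. SL p (\<lambda>u v. g u v w)) = SL h (\<lambda>u q. SL q (\<lambda>v w. g u v w))"
  unfolding SL_def using eval3[OF assms coassD[of h]]
  by (simp add: sum_list_map_concat o_def case_prod_unfold)

lemma SL_counitL: assumes "\<And>x y. L (x+y) = L x + L y" "\<And>c x. L (scaleC c x) = scaleC c (L x)"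
  shows "SL h (\<lambda>p w. scaleC (\<epsilon> p) (L w)) = L h"
proof -
  have "L h = L (sum_list (map (\<lambda>(u, v). scaleC (\<epsilon> u) v) (\<Delta> h)))" by (simp add: counitL)
  also have "\<dots> = sum_list (map L (map (\<lambda>(u, v). scaleC (\<epsilon> u) v) (\<Delta> h)))"
    by (rule lin_sum_list) (rule assms(1))
  also have "\<dots> = SL h (\<lambda>p w. scaleC (\<epsilon> p) (L w))"
    by (simp add: SL_def o_def case_prod_unfold assms(2))
  finally show ?thesis by simp
qed

lemma SL_counitR: assumes "\<And>x y. L (x+y) = L x + L y" "\<And>c x. L (scaleC c x) = scaleC c (L x)"
  shows "SL h (\<lambda>p w. scaleC (\<epsilon> w) (L p)) = L h"
proof -
  have "L h = L (sum_list (map (\<lambda>(u, v). scaleC (\<epsilon> v) u) (\<Delta> h)))" by (simp add: counitR)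
  also have "\<dots> = sum_list (map L (map (\<lambda>(u, v). scaleC (\<epsilon> v) u) (\<Delta> h)))"
    by (rule lin_sum_list) (rule assms(1))
  also have "\<dots> = SL h (\<lambda>p w. scaleC (\<epsilon> w) (L p))"
    by (simp add: SL_def o_def case_prod_unfold assms(2))
  finally show ?thesis by simp
qed

lemma SL_antipL: "SL h (\<lambda>u v. S u * v) = scaleC (\<epsilon> h) 1"
  using antipL by (simp add: SL_def)
lemma SL_antipR: "SL h (\<lambda>u v. u * S v) = scaleC (\<epsilon> h) 1"
  using antipR by (simp add: SL_def)


lemmas lin_simps = distrib_left distrib_right S_add S_scale mult_scaleC_left mult_scaleC_right
  SL_add_fun SL_scale_fun scaleC_add_right scaleC_add_left e_add e_scale Sinv_add Sinv_scale scaleC_scaleC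

lemma SL_lin: assumes "\<And>x y. L (x+y) = L x + L y" shows "L (SL h f) = SL h (\<lambda>u v. L (f u v))"
  unfolding SL_def by (subst lin_sum_list[of L, OF assms]) (simp add: o_def case_prod_unfold)

lemma cR: "S x = SL x (\<lambda>u v. scaleC (\<epsilon> v) (S u))"
  using SL_counitR[of S x] by (simp add: S_add S_scale)

lemma antipL_XY: "SL p (\<lambda>u v. X * S u * v * Y) = scaleC (\<epsilon> p) (X * Y)"
proof -
  have "SL p (\<lambda>u v. X * S u * v * Y) = X * SL p (\<lambda>u v. S u * v) * Y"
    by (simp add: SL_lmul SL_rmul mult.assoc)
  then show ?thesis by (simp add: SL_antipL mult_scaleC_left mult_scaleC_right)
qed

lemma antipL_Y: "SL p (\<lambda>u v. S u * v * Y) = scaleC (\<epsilon> p) Y"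
  using antipL_XY[of p 1 Y] by simp

lemma bil_aSb: "bil2 (\<lambda>a b. a * S b)"
  by (simp add: bil2_def lin_simps)

lemma S_antihom: "S (h * k) = S k * S h"
proof -
  have "S k * S h = SL k (\<lambda>k1 k2. scaleC (\<epsilon> k2) (S k1)) * SL h (\<lambda>h1 h2. scaleC (\<epsilon> h2) (S h1))"
    using cR[of k] cR[of h] by simp
  also have "\<dots> = SL k (\<lambda>k1 k2. SL h (\<lambda>h1 h2. scaleC (\<epsilon> k2) (S k1) * scaleC (\<epsilon> h2) (S h1)))"
    by (simp only: SL_rmul) (simp only: SL_lmul)
  also have "\<dots> = SL k (\<lambda>k1 k2. SL h (\<lambda>h1 h2. S k1 * S h1 * SL (h2 * k2) (\<lambda>a b. a * S b)))"
    by (intro SL_cong) (simp add: SL_antipR e_mult mult_scaleC_left mult_scaleC_right scaleC_scaleC mult.commute)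
  also have "\<dots> = SL k (\<lambda>k1 k2. SL h (\<lambda>h1 h2. S k1 * S h1 * SL h2 (\<lambda>a b. SL k2 (\<lambda>a' b'. (a*a') * S (b*b')))))"
    by (simp add: SL_mult[OF bil_aSb])
  also have "\<dots> = SL k (\<lambda>k1 k2. SL h (\<lambda>h1 h2. SL h2 (\<lambda>a b. S k1 * S h1 * a * SL k2 (\<lambda>a' b'. a' * S (b*b')))))"
    by (simp add: SL_lmul mult.assoc)
  also have "\<dots> = SL k (\<lambda>k1 k2. SL h (\<lambda>p w. SL p (\<lambda>u v. S k1 * S u * v * SL k2 (\<lambda>a' b'. a' * S (w*b')))))"
  proof (rule SL_cong)
    fix k1 k2
    have "tril3 (\<lambda>u v w. S k1 * S u * v * SL k2 (\<lambda>a' b'. a' * S (w*b')))"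
      by (simp add: tril3_def lin_simps SL_lmul SL_rmul)
    from SL_coass[OF this, of h]
    show "SL h (\<lambda>h1 h2. SL h2 (\<lambda>a b. S k1 * S h1 * a * SL k2 (\<lambda>a' b'. a' * S (b*b')))) =
          SL h (\<lambda>p w. SL p (\<lambda>u v. S k1 * S u * v * SL k2 (\<lambda>a' b'. a' * S (w*b'))))"
      by simp
  qed
  also have "\<dots> = SL k (\<lambda>k1 k2. SL h (\<lambda>p w. scaleC (\<epsilon> p) (S k1 * SL k2 (\<lambda>a' b'. a' * S (w*b')))))"
    by (simp add: antipL_XY)
  also have "\<dots> = SL k (\<lambda>k1 k2. S k1 * SL k2 (\<lambda>a' b'. a' * S (h*b')))"
  proof (rule SL_cong)
    fix k1 k2
    show "SL h (\<lambda>p w. scaleC (\<epsilon> p) (S k1 * SL k2 (\<lambda>a' b'. a' * S (w*b')))) = S k1 * SL k2 (\<lambda>a' b'. a' * S (h*b'))"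
      by (rule SL_counitL[where L="\<lambda>w. S k1 * SL k2 (\<lambda>a' b'. a' * S (w*b'))"]) (simp_all add: lin_simps SL_lmul)
  qed
  also have "\<dots> = SL k (\<lambda>k1 k2. SL k2 (\<lambda>a' b'. S k1 * a' * S (h * b')))"
    by (simp add: SL_lmul mult.assoc)
  also have "\<dots> = SL k (\<lambda>p w. SL p (\<lambda>u v. S u * v * S (h * w)))"
  proof -
    have "tril3 (\<lambda>u v w. S u * v * S (h * w))" by (simp add: tril3_def lin_simps)
    from SL_coass[OF this, of k] show ?thesis by simp
  qed
  also have "\<dots> = SL k (\<lambda>p w. scaleC (\<epsilon> p) (S (h*w)))"
    by (simp add: antipL_Y)
  also have "\<dots> = S (h * k)"
    by (rule SL_counitL) (simp_all add: lin_simps)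
  finally show ?thesis by simp
qed

lemma S_one: "S 1 = 1"
proof -
  have "SL 1 (\<lambda>u v. S u * v) = S 1 * 1" by (rule SL_one) (simp add: bil2_def lin_simps)
  then show ?thesis by (simp add: SL_antipL e_one scaleC_one)
qed

lemma Sinv_one: "Sinv 1 = 1" by (metis S_one Sinv_S)

lemma E1: "SL g (\<lambda>u v. Sinv v * u) = scaleC (\<epsilon> g) 1"
proof -
  have "\<And>u v. Sinv v * u = Sinv (S u * v)" by (metis S_antihom S_Sinv Sinv_S)
  then have "SL g (\<lambda>u v. Sinv v * u) = SL g (\<lambda>u v. Sinv (S u * v))" by simp
  also have "\<dots> = Sinv (SL g (\<lambda>u v. S u * v))" by (rule SL_lin[symmetric]) (rule Sinv_add)
  finally show ?thesis by (simp add: SL_antipL Sinv_scale Sinv_one)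
qed

lemma E2: "SL g (\<lambda>u v. v * Sinv u) = scaleC (\<epsilon> g) 1"
proof -
  have "\<And>u v. v * Sinv u = Sinv (u * S v)" by (metis S_antihom S_Sinv Sinv_S)
  then have "SL g (\<lambda>u v. v * Sinv u) = SL g (\<lambda>u v. Sinv (u * S v))" by simp
  also have "\<dots> = Sinv (SL g (\<lambda>u v. u * S v))" by (rule SL_lin[symmetric]) (rule Sinv_add)
  finally show ?thesis by (simp add: SL_antipR Sinv_scale Sinv_one)
qed

end


lemma CM_map2: "concat (map (\<lambda>(u,v). [f u v]) xs) = map (\<lambda>(u,v). f u v) xs"
  by (induction xs) auto

lemma teq_map_add2: "(\<And>u v. teq R [f u v] [g u v, h u v]) \<Longrightarrow>
  teq R (map (\<lambda>(u,v). f u v) xs) (map (\<lambda>(u,v). g u v) xs @ map (\<lambda>(u,v). h u v) xs)"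
  by (rule teq_map_add) (auto split: prod.splits)
lemma ceq_map_scale2: "(\<And>u v. ceq R (fsum [f u v]) (scaleC c (fsum [g u v]))) \<Longrightarrow>
  ceq R (fsum (map (\<lambda>(u,v). f u v) xs)) (scaleC c (fsum (map (\<lambda>(u,v). g u v) xs)))"
  by (rule ceq_map_scale) (auto split: prod.splits)
lemma teq_map2: "(\<And>u v. teq R [f u v] [g u v]) \<Longrightarrow> teq R (map (\<lambda>(u,v). f u v) xs) (map (\<lambda>(u,v). g u v) xs)"
  by (rule teq_map) (auto split: prod.splits)

lemma concat_concat': "concat (concat xss) = concat (map concat xss)"
  by (induction xss) auto

context HG begin

lemma d_add: "teq rel2 (\<delta> (x+y)) (\<delta> x @ \<delta> y)" using com by (simp add: comodule_algebra_def linear2_def)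
lemma d_scale: "teq rel2 (\<delta> (scaleC c x)) (map (\<lambda>(u, v). (scaleC c u, v)) (\<delta> x))"
  using com by (simp add: comodule_algebra_def linear2_def)
lemma d_coass: "teq rel3 [(x, h, k). (y, k) \<leftarrow> \<delta> a, (x, h) \<leftarrow> \<delta> y] [(x, h, k). (x, g) \<leftarrow> \<delta> a, (h, k) \<leftarrow> \<Delta> g]"
  using com by (simp add: comodule_algebra_def)
lemma d_counit: "sum_list (map (\<lambda>(x, h). scaleC (\<epsilon> h) x) (\<delta> a)) = a"
  using com by (simp add: comodule_algebra_def)
lemma d_mult: "teq rel2 (\<delta> (a * a')) [(x * y, h * k). (x, h) \<leftarrow> \<delta> a, (y, k) \<leftarrow> \<delta> a']"
  using com by (simp add: comodule_algebra_def)
lemma d_one: "teq rel2 (\<delta> 1) [(1, 1)]"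
  using com by (simp add: comodule_algebra_def)

lemma d_add_map: assumes "wd rel2 (\<lambda>p. fsum (G p)) (cspan R')"
  shows "teq R' (concat (map G (\<delta> (x+y)))) (concat (map G (\<delta> x)) @ concat (map G (\<delta> y)))"
  using wd_map[OF assms d_add] by simp

lemma d_scale_map: assumes "wd rel2 (\<lambda>p. fsum (G p)) (cspan R')"
  and "\<And>u v. ceq R' (fsum (G (scaleC c u, v))) (scaleC c (fsum (G (u,v))))"
  shows "ceq R' (fsum (concat (map G (\<delta> (scaleC c y))))) (scaleC c (fsum (concat (map G (\<delta> y)))))"
proof -
  have "teq R' (concat (map G (\<delta> (scaleC c y)))) (concat (map G (map (\<lambda>(u, v). (scaleC c u, v)) (\<delta> y))))"
    by (rule wd_map[OF assms(1) d_scale])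
  moreover have "ceq R' (fsum (concat (map G (map (\<lambda>(u, v). (scaleC c u, v)) (\<delta> y))))) (scaleC c (fsum (concat (map G (\<delta> y)))))"
    by (simp add: o_def case_prod_unfold) (rule ceq_CM_scale, metis assms(2) prod.collapse)
  ultimately show ?thesis unfolding teq_ceq by (rule ceq_trans)
qed

lemma d_add_map2: assumes "wd rel2 (\<lambda>p. fsum ((\<lambda>(u,v). [f u v]) p)) (cspan R')"
  shows "teq R' (map (\<lambda>(u,v). f u v) (\<delta> (x+y))) (map (\<lambda>(u,v). f u v) (\<delta> x) @ map (\<lambda>(u,v). f u v) (\<delta> y))"
  using d_add_map[OF assms, of x y] by (simp only: CM_map2)

lemma d_scale_map2: assumes "wd rel2 (\<lambda>p. fsum ((\<lambda>(u,v). [f u v]) p)) (cspan R')"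
  and "\<And>u v. ceq R' (fsum [f (scaleC c u) v]) (scaleC c (fsum [f u v]))"
  shows "ceq R' (fsum (map (\<lambda>(u,v). f u v) (\<delta> (scaleC c y)))) (scaleC c (fsum (map (\<lambda>(u,v). f u v) (\<delta> y))))"
  using d_scale_map[OF assms(1), of c y] assms(2) by (simp only: CM_map2 prod.case)


lemma wd_G1: fixes h :: 'h shows "wd rel2 (\<lambda>p. fsum ((\<lambda>(y,k). [(x, y, h*k)]) p)) (cspan rel3)"
  by (rule wdL_rel2) (simp_all add: r3_add2 r3_add3 r3_sc2 r3_sc3 distrib_left mult_scaleC_right)


lemma wd_Phi: "wd rel3 (\<lambda>p. fsum ((\<lambda>(x,h,a'). map (\<lambda>(y,k). (x,y,h*k)) (\<delta> a')) p)) (cspan rel3)"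
proof (rule wdL_rel3, goal_cases)
  case (1 x x' h a') show ?case by (simp only: prod.case) (rule teq_map_add2, rule r3_add1)
next
  case (2 x h h' a') show ?case by (simp only: prod.case distrib_right) (rule teq_map_add2, rule r3_add3)
next
  case (3 x h a' a'') show ?case by (simp only: prod.case) (rule d_add_map2[OF wd_G1[of x h]])
next
  case (4 c x h a') show ?case by (simp only: prod.case) (rule ceq_map_scale2, rule r3_sc1)
next
  case (5 c x h a') show ?case by (simp only: prod.case mult_scaleC_left) (rule ceq_map_scale2, rule r3_sc3)
next
  case (6 c x h a') show ?case by (simp only: prod.case) (rule d_scale_map2[OF wd_G1], rule r3_sc2)
qed

lemma wd_Ma: fixes a :: 'a shows "wd rel3 (\<lambda>p. fsum ((\<lambda>(x,h,k). [(a, x, Sinv k * h)]) p)) (cspan rel3)"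
  by (rule wdL_rel3) (simp_all add: r3_add2 r3_add3 r3_sc2 r3_sc3 distrib_left distrib_right Sinv_add Sinv_scale mult_scaleC_left mult_scaleC_right)

lemma P_B1: fixes a :: 'a shows "teq rel3 (concat (map (\<lambda>(y,h). map (\<lambda>(y',k). (a, y', Sinv h * k)) (\<delta> y)) (\<delta> a'))) [(a,a',1)]"
proof -
  let ?Ma = "\<lambda>(x,h,k). [(a, x, Sinv k * h)]"
  have 1: "teq rel3 (concat (map ?Ma [(x, h, k). (y, k) \<leftarrow> \<delta> a', (x, h) \<leftarrow> \<delta> y]))
                    (concat (map ?Ma [(x, h, k). (x, g) \<leftarrow> \<delta> a', (h, k) \<leftarrow> \<Delta> g]))"
    by (rule wd_map[OF wd_Ma[of a] d_coass[of a']])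
  have 2: "concat (map ?Ma [(x, h, k). (y, k) \<leftarrow> \<delta> a', (x, h) \<leftarrow> \<delta> y])
         = concat (map (\<lambda>(y,h). map (\<lambda>(y',k). (a, y', Sinv h * k)) (\<delta> y)) (\<delta> a'))"
    by (simp add: map_concat concat_concat' o_def case_prod_unfold)
  have 3: "concat (map ?Ma [(x, h, k). (x, g) \<leftarrow> \<delta> a', (h, k) \<leftarrow> \<Delta> g])
         = concat (map (\<lambda>(x,g). map (\<lambda>(h,k). (a, x, Sinv k * h)) (\<Delta> g)) (\<delta> a'))"
    by (simp add: map_concat concat_concat' o_def case_prod_unfold)
  have 4: "teq rel3 (map (\<lambda>(h,k). (a, x, Sinv k * h)) (\<Delta> g)) [(a, scaleC (\<epsilon> g) x, 1)]" for x g
  proof -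
    have eq: "map (\<lambda>(h,k). (a, x, Sinv k * h)) (\<Delta> g) = map (\<lambda>z. (a,x,z)) (map (\<lambda>(h,k). Sinv k * h) (\<Delta> g))"
      by (simp add: o_def case_prod_unfold)
    have s: "sum_list (map (\<lambda>(h,k). Sinv k * h) (\<Delta> g)) = scaleC (\<epsilon> g) 1"
      using E1[of g] by (simp add: SL_def)
    have "teq rel3 (map (\<lambda>z. (a,x,z)) (map (\<lambda>(h,k). Sinv k * h) (\<Delta> g))) [(a,x,sum_list (map (\<lambda>(h,k). Sinv k * h) (\<Delta> g)))]"
      by (rule col3_3)
    then have "teq rel3 (map (\<lambda>(h,k). (a, x, Sinv k * h)) (\<Delta> g)) [(a, x, scaleC (\<epsilon> g) 1)]"
      by (simp only: eq[symmetric] s)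
    then show ?thesis by (rule teq_trans[OF _ swap23b])
  qed
  have 5: "teq rel3 (concat (map (\<lambda>(x,g). map (\<lambda>(h,k). (a, x, Sinv k * h)) (\<Delta> g)) (\<delta> a')))
                    (concat (map (\<lambda>(x,g). [(a, scaleC (\<epsilon> g) x, 1)]) (\<delta> a')))"
    by (rule teq_concat) (auto split: prod.splits intro: 4)
  have 6: "concat (map (\<lambda>(x,g). [(a, scaleC (\<epsilon> g) x, 1)]) (\<delta> a'))
         = map (\<lambda>y. (a,y,1)) (map (\<lambda>(x,g). scaleC (\<epsilon> g) x) (\<delta> a'))"
    by (simp add: CM_map2 o_def case_prod_unfold)
  have 7: "teq rel3 (map (\<lambda>y. (a,y,1)) (map (\<lambda>(x,g). scaleC (\<epsilon> g) x) (\<delta> a'))) [(a,a',1)]"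
    using col3_2[where a=a and ys="map (\<lambda>(x,g). scaleC (\<epsilon> g) x) (\<delta> a')" and c=1] by (simp add: d_counit)
  have A: "teq rel3 (concat (map (\<lambda>(y,h). map (\<lambda>(y',k). (a, y', Sinv h * k)) (\<delta> y)) (\<delta> a')))
              (concat (map (\<lambda>(x,g). map (\<lambda>(h,k). (a, x, Sinv k * h)) (\<Delta> g)) (\<delta> a')))"
    using 1 by (simp only: 2 3)
  show ?thesis using teq_trans[OF A teq_trans[OF 5 7[folded 6]]] .
qed

lemma B1: "X \<in> cotensor \<delta> Sinv \<Longrightarrow> X \<in> tensor_coinv \<delta>"
proof -
  let ?Phi = "\<lambda>(x,h,a'). map (\<lambda>(y,k). (x,y,h*k)) (\<delta> a')"
  assume "X \<in> cotensor \<delta> Sinv"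
  then have T: "teq rel3 [(x, h, a'). (a, a') \<leftarrow> X, (x, h) \<leftarrow> \<delta> a] [(a, Sinv h, y). (a, a') \<leftarrow> X, (y, h) \<leftarrow> \<delta> a']"
    by (simp add: cotensor_def)
  have 1: "teq rel3 (concat (map ?Phi [(x, h, a'). (a, a') \<leftarrow> X, (x, h) \<leftarrow> \<delta> a]))
                    (concat (map ?Phi [(a, Sinv h, y). (a, a') \<leftarrow> X, (y, h) \<leftarrow> \<delta> a']))"
    by (rule wd_map[OF wd_Phi T])
  have 2: "concat (map ?Phi [(x, h, a'). (a, a') \<leftarrow> X, (x, h) \<leftarrow> \<delta> a])
       = [(x, y, h * k). (a, a') \<leftarrow> X, (x, h) \<leftarrow> \<delta> a, (y, k) \<leftarrow> \<delta> a']"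
    by (simp add: map_concat concat_concat' o_def case_prod_unfold)
  have 3: "concat (map ?Phi [(a, Sinv h, y). (a, a') \<leftarrow> X, (y, h) \<leftarrow> \<delta> a'])
       = concat (map (\<lambda>(a,a'). concat (map (\<lambda>(y,h). map (\<lambda>(y',k). (a, y', Sinv h * k)) (\<delta> y)) (\<delta> a'))) X)"
    by (simp add: map_concat concat_concat' o_def case_prod_unfold)
  have 4: "teq rel3 (concat (map (\<lambda>(a,a'). concat (map (\<lambda>(y,h). map (\<lambda>(y',k). (a, y', Sinv h * k)) (\<delta> y)) (\<delta> a'))) X))
                    (concat (map (\<lambda>(a,a'). [(a,a',1)]) X))"
    by (rule teq_concat) (auto split: prod.splits intro: P_B1)
  have 5: "concat (map (\<lambda>(a,a'). [(a,a',1)]) X) = [(a, a', 1). (a, a') \<leftarrow> X]"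
    by (simp add: CM_map2)
  have A: "teq rel3 [(x, y, h * k). (a, a') \<leftarrow> X, (x, h) \<leftarrow> \<delta> a, (y, k) \<leftarrow> \<delta> a']
     (concat (map (\<lambda>(a,a'). concat (map (\<lambda>(y,h). map (\<lambda>(y',k). (a, y', Sinv h * k)) (\<delta> y)) (\<delta> a'))) X))"
    using 1 by (simp only: 2 3)
  have B: "teq rel3 [(x, y, h * k). (a, a') \<leftarrow> X, (x, h) \<leftarrow> \<delta> a, (y, k) \<leftarrow> \<delta> a'] [(a, a', 1). (a, a') \<leftarrow> X]"
    using teq_trans[OF A 4] unfolding 5 .
  show ?thesis unfolding tensor_coinv_def mem_Collect_eq by (rule B)
qed


lemma wd_G2: fixes h :: 'h shows "wd rel2 (\<lambda>p. fsum ((\<lambda>(z,k). [(x, h * Sinv k, z)]) p)) (cspan rel3)"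
  by (rule wdL_rel2) (simp_all add: r3_add2 r3_add3 r3_sc2 r3_sc3 distrib_left Sinv_add Sinv_scale mult_scaleC_right)

lemma wd_Gam: "wd rel3 (\<lambda>p. fsum ((\<lambda>(x,y,h). map (\<lambda>(z,k). (x, h * Sinv k, z)) (\<delta> y)) p)) (cspan rel3)"
proof (rule wdL_rel3, goal_cases)
  case (1 x x' y h) show ?case by (simp only: prod.case) (rule teq_map_add2, rule r3_add1)
next
  case (2 x y y' h) show ?case by (simp only: prod.case) (rule d_add_map2[OF wd_G2[where x=x and h=h]])
next
  case (3 x y h h') show ?case by (simp only: prod.case distrib_right) (rule teq_map_add2, rule r3_add2)
next
  case (4 c x y h) show ?case by (simp only: prod.case) (rule ceq_map_scale2, rule r3_sc1)
next
  case (5 c x y h) show ?case by (simp only: prod.case) (rule d_scale_map2[OF wd_G2[where x=x and h=h]], rule r3_sc3)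
next
  case (6 c x y h) show ?case by (simp only: prod.case mult_scaleC_left) (rule ceq_map_scale2, rule r3_sc2)
qed

lemma wd_Mxh: fixes h :: 'h shows "wd rel3 (\<lambda>p. fsum ((\<lambda>(z,k',k). [(x, h * k * Sinv k', z)]) p)) (cspan rel3)"
  by (rule wdL_rel3) (simp_all add: r3_add2 r3_add3 r3_sc2 r3_sc3 distrib_left distrib_right Sinv_add Sinv_scale mult_scaleC_left mult_scaleC_right)

lemma P_B2: fixes h :: 'h shows "teq rel3 (concat (map (\<lambda>(y,k). map (\<lambda>(z,k'). (x, h * k * Sinv k', z)) (\<delta> y)) (\<delta> a'))) [(x,h,a')]"
proof -
  let ?M = "\<lambda>(z,k',k). [(x, h * k * Sinv k', z)]"
  have 1: "teq rel3 (concat (map ?M [(x, h, k). (y, k) \<leftarrow> \<delta> a', (x, h) \<leftarrow> \<delta> y]))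
                    (concat (map ?M [(x, h, k). (x, g) \<leftarrow> \<delta> a', (h, k) \<leftarrow> \<Delta> g]))"
    by (rule wd_map[OF wd_Mxh[where x=x and h=h] d_coass[of a']])
  have 2: "concat (map ?M [(x, h, k). (y, k) \<leftarrow> \<delta> a', (x, h) \<leftarrow> \<delta> y])
         = concat (map (\<lambda>(y,k). map (\<lambda>(z,k'). (x, h * k * Sinv k', z)) (\<delta> y)) (\<delta> a'))"
    by (simp add: map_concat concat_concat' o_def case_prod_unfold)
  have 3: "concat (map ?M [(x, h, k). (x, g) \<leftarrow> \<delta> a', (h, k) \<leftarrow> \<Delta> g])
         = concat (map (\<lambda>(z,g). map (\<lambda>(k',k). (x, h * k * Sinv k', z)) (\<Delta> g)) (\<delta> a'))"
    by (simp add: map_concat concat_concat' o_def case_prod_unfold)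
  have 4: "teq rel3 (map (\<lambda>(k',k). (x, h * k * Sinv k', z)) (\<Delta> g)) [(x, h, scaleC (\<epsilon> g) z)]" for z g
  proof -
    have eq: "map (\<lambda>(k',k). (x, h * k * Sinv k', z)) (\<Delta> g) = map (\<lambda>y. (x,y,z)) (map (\<lambda>(k',k). h * k * Sinv k') (\<Delta> g))"
      by (simp add: o_def case_prod_unfold)
    have s: "sum_list (map (\<lambda>(k',k). h * k * Sinv k') (\<Delta> g)) = scaleC (\<epsilon> g) h"
    proof -
      have "sum_list (map (\<lambda>(k',k). h * k * Sinv k') (\<Delta> g)) = h * SL g (\<lambda>u v. v * Sinv u)"
        by (simp add: SL_def sum_list_case_lmul mult.assoc)
      then show ?thesis by (simp add: E2 mult_scaleC_right)
    qed
    have "teq rel3 (map (\<lambda>y. (x,y,z)) (map (\<lambda>(k',k). h * k * Sinv k') (\<Delta> g))) [(x,sum_list (map (\<lambda>(k',k). h * k * Sinv k') (\<Delta> g)),z)]"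
      by (rule col3_2)
    then have "teq rel3 (map (\<lambda>(k',k). (x, h * k * Sinv k', z)) (\<Delta> g)) [(x, scaleC (\<epsilon> g) h, z)]"
      by (simp only: eq[symmetric] s)
    then show ?thesis by (rule teq_trans[OF _ swap23])
  qed
  have 5: "teq rel3 (concat (map (\<lambda>(z,g). map (\<lambda>(k',k). (x, h * k * Sinv k', z)) (\<Delta> g)) (\<delta> a')))
                    (concat (map (\<lambda>(z,g). [(x, h, scaleC (\<epsilon> g) z)]) (\<delta> a')))"
    by (rule teq_concat) (auto split: prod.splits intro: 4)
  have 6: "concat (map (\<lambda>(z,g). [(x, h, scaleC (\<epsilon> g) z)]) (\<delta> a'))
         = map (\<lambda>z. (x,h,z)) (map (\<lambda>(z,g). scaleC (\<epsilon> g) z) (\<delta> a'))"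
    by (simp add: CM_map2 o_def case_prod_unfold)
  have 7: "teq rel3 (map (\<lambda>z. (x,h,z)) (map (\<lambda>(z,g). scaleC (\<epsilon> g) z) (\<delta> a'))) [(x,h,a')]"
    using col3_3[where a=x and b=h and zs="map (\<lambda>(z,g). scaleC (\<epsilon> g) z) (\<delta> a')"] by (simp add: d_counit)
  have A: "teq rel3 (concat (map (\<lambda>(y,k). map (\<lambda>(z,k'). (x, h * k * Sinv k', z)) (\<delta> y)) (\<delta> a')))
              (concat (map (\<lambda>(z,g). map (\<lambda>(k',k). (x, h * k * Sinv k', z)) (\<Delta> g)) (\<delta> a')))"
    using 1 by (simp only: 2 3)
  show ?thesis using teq_trans[OF A teq_trans[OF 5 7[folded 6]]] .
qed

lemma B2: "X \<in> tensor_coinv \<delta> \<Longrightarrow> X \<in> cotensor \<delta> Sinv"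
proof -
  let ?Gam = "\<lambda>(x,y,h). map (\<lambda>(z,k). (x, h * Sinv k, z)) (\<delta> y)"
  assume "X \<in> tensor_coinv \<delta>"
  then have T: "teq rel3 [(x, y, h * k). (a, a') \<leftarrow> X, (x, h) \<leftarrow> \<delta> a, (y, k) \<leftarrow> \<delta> a'] [(a, a', 1). (a, a') \<leftarrow> X]"
    by (simp add: tensor_coinv_def)
  have 1: "teq rel3 (concat (map ?Gam [(x, y, h * k). (a, a') \<leftarrow> X, (x, h) \<leftarrow> \<delta> a, (y, k) \<leftarrow> \<delta> a']))
                    (concat (map ?Gam [(a, a', 1). (a, a') \<leftarrow> X]))"
    by (rule wd_map[OF wd_Gam T])
  have 2: "concat (map ?Gam [(x, y, h * k). (a, a') \<leftarrow> X, (x, h) \<leftarrow> \<delta> a, (y, k) \<leftarrow> \<delta> a'])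
    = concat (map (\<lambda>(a,a'). concat (map (\<lambda>(x,h). concat (map (\<lambda>(y,k). map (\<lambda>(z,k'). (x, h * k * Sinv k', z)) (\<delta> y)) (\<delta> a'))) (\<delta> a))) X)"
    by (simp add: map_concat concat_concat' o_def case_prod_unfold)
  have 3: "concat (map ?Gam [(a, a', 1). (a, a') \<leftarrow> X]) = [(a, Sinv h, y). (a, a') \<leftarrow> X, (y, h) \<leftarrow> \<delta> a']"
    by (simp add: map_concat concat_concat' o_def case_prod_unfold)
  have 4: "teq rel3 (concat (map (\<lambda>(a,a'). concat (map (\<lambda>(x,h). concat (map (\<lambda>(y,k). map (\<lambda>(z,k'). (x, h * k * Sinv k', z)) (\<delta> y)) (\<delta> a'))) (\<delta> a))) X))
      (concat (map (\<lambda>(a,a'). concat (map (\<lambda>(x,h). [(x,h,a')]) (\<delta> a))) X))"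
    by (rule teq_concat) (auto split: prod.splits intro!: teq_concat P_B2)
  have 5: "concat (map (\<lambda>(a,a'). concat (map (\<lambda>(x,h). [(x,h,a')]) (\<delta> a))) X) = [(x, h, a'). (a, a') \<leftarrow> X, (x, h) \<leftarrow> \<delta> a]"
    by (simp add: CM_map2)
  have A: "teq rel3 [(x, h, a'). (a, a') \<leftarrow> X, (x, h) \<leftarrow> \<delta> a] [(a, Sinv h, y). (a, a') \<leftarrow> X, (y, h) \<leftarrow> \<delta> a']"
    using teq_trans[OF teq_sym[OF 4] 1[unfolded 2 3]] unfolding 5 .
  show ?thesis unfolding cotensor_def mem_Collect_eq by (rule A)
qed

end


context HG begin

abbreviation "Bc \<equiv> coinvariants \<delta>"

lemma gal_inj: "teq rel2 (galois_map \<delta> X) (galois_map \<delta> Y) \<Longrightarrow> teq (relB2 Bc) X Y"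
  using gal by (simp add: hopf_galois_def)
lemma tr_eq: "teq rel2 (galois_map \<delta> (\<tau> h)) [(1, h)]"
  using tr by (simp add: translation_map_def)
lemma gm_append: "galois_map \<delta> (X @ Y) = galois_map \<delta> X @ galois_map \<delta> Y"
  by (simp add: galois_map_def)
lemma gm_single: "galois_map \<delta> [(1, v)] = \<delta> v"
  by (simp add: galois_map_def case_prod_unfold)

lemma tau_add: "teq (relB2 Bc) (\<tau> (h+k)) (\<tau> h @ \<tau> k)"
proof (rule gal_inj)
  have "teq rel2 (galois_map \<delta> (\<tau> (h+k))) [(1,h),(1,k)]"
    using teq_trans[OF tr_eq r2_add2] .
  moreover have "teq rel2 [(1,h),(1,k)] (galois_map \<delta> (\<tau> h) @ galois_map \<delta> (\<tau> k))"
    using teq_append[OF teq_sym[OF tr_eq[of h]] teq_sym[OF tr_eq[of k]]] by simp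
  ultimately show "teq rel2 (galois_map \<delta> (\<tau> (h+k))) (galois_map \<delta> (\<tau> h @ \<tau> k))"
    unfolding gm_append by (rule teq_trans)
qed

lemma tau_scale: "ceq (relB2 Bc) (fsum (\<tau> (scaleC c h))) (scaleC c (fsum (\<tau> h)))"
proof -
  have gm: "galois_map \<delta> (map (\<lambda>(u,v). (scaleC c u, v)) (\<tau> h)) = map (\<lambda>(u,v). (scaleC c u, v)) (galois_map \<delta> (\<tau> h))"
    by (simp add: galois_map_def map_concat o_def case_prod_unfold mult_scaleC_left)
  have a: "ceq rel2 (fsum (map (\<lambda>(u,v). (scaleC c u, v)) (galois_map \<delta> (\<tau> h)))) (scaleC c (fsum (map (\<lambda>(u,v). (u, v)) (galois_map \<delta> (\<tau> h)))))"
    by (rule ceq_map_scale2) (rule r2_sc1)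
  have b: "ceq rel2 (scaleC c (fsum (galois_map \<delta> (\<tau> h)))) (scaleC c (fsum [(1,h)]))"
    using tr_eq[of h] by (simp add: teq_ceq ceq_scale)
  have c: "ceq rel2 (scaleC c (fsum [(1::'a,h)])) (fsum [(1, scaleC c h)])"
    by (rule ceq_sym[OF r2_sc2])
  have d: "ceq rel2 (fsum [(1, scaleC c h)]) (fsum (galois_map \<delta> (\<tau> (scaleC c h))))"
    using tr_eq[of "scaleC c h"] by (simp add: teq_ceq ceq_sym)
  have "teq rel2 (galois_map \<delta> (\<tau> (scaleC c h))) (galois_map \<delta> (map (\<lambda>(u,v). (scaleC c u, v)) (\<tau> h)))"
    unfolding gm teq_ceq using a b c d by (simp add: case_prod_unfold) (meson ceq_sym ceq_trans)
  then have e: "teq (relB2 Bc) (\<tau> (scaleC c h)) (map (\<lambda>(u,v). (scaleC c u, v)) (\<tau> h))"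
    by (rule gal_inj)
  have f: "ceq (relB2 Bc) (fsum (map (\<lambda>(u,v). (scaleC c u, v)) (\<tau> h))) (scaleC c (fsum (map (\<lambda>(u,v). (u, v)) (\<tau> h))))"
    by (rule ceq_map_scale2) (rule ceq_mono[OF rel2_B r2_sc1])
  show ?thesis using e f by (simp add: teq_ceq case_prod_unfold) (rule ceq_trans)
qed

lemma tau_one: "teq (relB2 Bc) (\<tau> 1) [(1,1)]"
proof (rule gal_inj)
  show "teq rel2 (galois_map \<delta> (\<tau> 1)) (galois_map \<delta> [(1,1)])"
    unfolding gm_single using teq_trans[OF tr_eq teq_sym[OF d_one]] .
qed

lemma wd_Mw: fixes w :: 'a shows "wd rel2 (\<lambda>p. fsum ((\<lambda>(s,t). [(w * s, t)]) p)) (cspan rel2)"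
  by (rule wdL_rel2) (simp_all add: r2_add1 r2_add2 r2_sc1 r2_sc2 distrib_left mult_scaleC_right)

lemma ident: "teq (relB2 Bc) (concat (map (\<lambda>(w,k). map (\<lambda>(p,q). (w * p, q)) (\<tau> k)) (\<delta> v))) [(1,v)]"
proof (rule gal_inj)
  have 1: "galois_map \<delta> (concat (map (\<lambda>(w,k). map (\<lambda>(p,q). (w * p, q)) (\<tau> k)) (\<delta> v)))
     = concat (map (\<lambda>(w,k). concat (map (\<lambda>(s,t). [(w * s, t)]) (galois_map \<delta> (\<tau> k)))) (\<delta> v))"
    by (simp add: galois_map_def map_concat concat_concat' o_def case_prod_unfold mult.assoc)
  have 2: "teq rel2 (concat (map (\<lambda>(s,t). [(w * s, t)]) (galois_map \<delta> (\<tau> k)))) [(w,k)]" for w k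
    using wd_map[OF wd_Mw[of w] tr_eq[of k]] by simp
  have 3: "teq rel2 (concat (map (\<lambda>(w,k). concat (map (\<lambda>(s,t). [(w * s, t)]) (galois_map \<delta> (\<tau> k)))) (\<delta> v)))
                    (concat (map (\<lambda>(w,k). [(w,k)]) (\<delta> v)))"
    by (rule teq_concat) (auto split: prod.splits intro: 2)
  have 4: "concat (map (\<lambda>(w,k). [(w,k)]) (\<delta> v)) = \<delta> v"
    by (simp add: CM_map2)
  show "teq rel2 (galois_map \<delta> (concat (map (\<lambda>(w,k). map (\<lambda>(p,q). (w * p, q)) (\<tau> k)) (\<delta> v)))) (galois_map \<delta> [(1, v)])"
    unfolding 1 gm_single using 3 unfolding 4 .
qed


lemma teqB3: "teq rel3 xs ys \<Longrightarrow> teq (relB3 B) xs ys" by (rule teq_mono[OF rel3_B])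
lemma ceqB3: "ceq rel3 f g \<Longrightarrow> ceq (relB3 B) f g" by (rule ceq_mono[OF rel3_B])

lemma wd_PsiI: fixes y :: 'a shows "wd (relB2 Bc) (\<lambda>p. fsum ((\<lambda>(u,v). [(x, y*u, v)]) p)) (cspan (relB3 Bc))"
proof (rule wdL_relB2)
  show "wd rel2 (\<lambda>p. fsum ((\<lambda>(u,v). [(x, y*u, v)]) p)) (cspan (relB3 Bc))"
    by (rule wdL_rel2) (simp_all add: teqB3 ceqB3 r3_add2 r3_add3 r3_sc2 r3_sc3 distrib_left mult_scaleC_right)
  show "teq (relB3 Bc) ((\<lambda>(u,v). [(x, y*u, v)]) (u * b, v)) ((\<lambda>(u,v). [(x, y*u, v)]) (u, b * v))"
    if "b \<in> Bc" for u v b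
    using rB3_bal[OF that, of x "y*u" v] by (simp add: mult.assoc)
qed

lemma wd_Psi: "wd rel3 (\<lambda>p. fsum ((\<lambda>(x,y,h). map (\<lambda>(u,v). (x, y*u, v)) (\<tau> h)) p)) (cspan (relB3 Bc))"
proof (rule wdL_rel3, goal_cases)
  case (1 x x' y h) show ?case by (simp only: prod.case) (rule teq_map_add2, rule teqB3, rule r3_add1)
next
  case (2 x y y' h) show ?case by (simp only: prod.case distrib_right) (rule teq_map_add2, rule teqB3, rule r3_add2)
next
  case (3 x y h h')
  show ?case using wd_map[OF wd_PsiI[where x=x and y=y] tau_add[of h h']] by (simp only: prod.case CM_map2 map_append concat_append)
next
  case (4 c x y h) show ?case by (simp only: prod.case) (rule ceq_map_scale2, rule ceqB3, rule r3_sc1)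
next
  case (5 c x y h) show ?case by (simp only: prod.case mult_scaleC_left) (rule ceq_map_scale2, rule ceqB3, rule r3_sc2)
next
  case (6 c x y h)
  show ?case using wd_map_ceq[OF wd_PsiI[where x=x and y=y] tau_scale[of c h]] by (simp only: prod.case CM_map2)
qed

lemma wd_ChiI: fixes u :: 'a shows "wd rel2 (\<lambda>p. fsum ((\<lambda>(w,k). [(x, u*w, k)]) p)) (cspan rel3)"
  by (rule wdL_rel2) (simp_all add: r3_add2 r3_add3 r3_sc2 r3_sc3 distrib_left mult_scaleC_right)

lemma wd_Ny: fixes y :: 'a shows "wd rel2 (\<lambda>p. fsum ((\<lambda>(p,q). map (\<lambda>(w,k). (p*w, q*k)) (\<delta> y)) p)) (cspan rel2)"
proof (rule wdL_rel2, goal_cases)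
  case (1 p p' q) show ?case by (simp only: prod.case distrib_right) (rule teq_map_add2, rule r2_add1)
next
  case (2 p q q') show ?case by (simp only: prod.case distrib_right) (rule teq_map_add2, rule r2_add2)
next
  case (3 c p q) show ?case by (simp only: prod.case mult_scaleC_left) (rule ceq_map_scale2, rule r2_sc1)
next
  case (4 c p q) show ?case by (simp only: prod.case mult_scaleC_left) (rule ceq_map_scale2, rule r2_sc2)
qed

lemma coinv_eq: "b \<in> Bc \<Longrightarrow> teq rel2 (\<delta> b) [(b, 1)]"
  by (simp add: coinvariants_def)

lemma d_bal: assumes "b \<in> Bc" shows "teq rel2 (\<delta> (b * y)) (map (\<lambda>(w,k). (b * w, k)) (\<delta> y))"
proof -
  let ?N = "\<lambda>(p,q). map (\<lambda>(w,k). (p*w, q*k)) (\<delta> y)"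
  have 1: "teq rel2 (\<delta> (b * y)) (concat (map ?N (\<delta> b)))"
    using d_mult[of b y] by (simp add: o_def case_prod_unfold)
  have 2: "teq rel2 (concat (map ?N (\<delta> b))) (concat (map ?N [(b,1)]))"
    by (rule wd_map[OF wd_Ny coinv_eq[OF assms]])
  show ?thesis using teq_trans[OF 1 2] by simp
qed

lemma wd_Chi: "wd (relB3 Bc) (\<lambda>p. fsum ((\<lambda>(x,u,v). map (\<lambda>(w,k). (x, u*w, k)) (\<delta> v)) p)) (cspan rel3)"
proof (rule wdL_relB3)
  show "wd rel3 (\<lambda>p. fsum ((\<lambda>(x,u,v). map (\<lambda>(w,k). (x, u*w, k)) (\<delta> v)) p)) (cspan rel3)"
  proof (rule wdL_rel3, goal_cases)
    case (1 x x' u v) show ?case by (simp only: prod.case) (rule teq_map_add2, rule r3_add1)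
  next
    case (2 x u u' v) show ?case by (simp only: prod.case distrib_right) (rule teq_map_add2, rule r3_add2)
  next
    case (3 x u v v') show ?case by (simp only: prod.case) (rule d_add_map2[OF wd_ChiI[where x=x and u=u]])
  next
    case (4 c x u v) show ?case by (simp only: prod.case) (rule ceq_map_scale2, rule r3_sc1)
  next
    case (5 c x u v) show ?case by (simp only: prod.case mult_scaleC_left) (rule ceq_map_scale2, rule r3_sc2)
  next
    case (6 c x u v) show ?case
      by (simp only: prod.case) (rule d_scale_map2[OF wd_ChiI[where x=x and u=u]], simp only: mult_scaleC_right, rule r3_sc2)
  qed
  show "teq rel3 ((\<lambda>(x,u,v). map (\<lambda>(w,k). (x, u*w, k)) (\<delta> v)) (z, x * b, y))
                 ((\<lambda>(x,u,v). map (\<lambda>(w,k). (x, u*w, k)) (\<delta> v)) (z, x, b * y))" if "b \<in> Bc" for z x y b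
  proof -
    have "teq rel3 (concat (map (\<lambda>(w,k). [(z, x*w, k)]) (\<delta> (b * y))))
                   (concat (map (\<lambda>(w,k). [(z, x*w, k)]) (map (\<lambda>(w,k). (b * w, k)) (\<delta> y))))"
      by (rule wd_map[OF wd_ChiI[where x=z and u=x] d_bal[OF that]])
    then show ?thesis by (simp add: CM_map2 o_def case_prod_unfold mult.assoc teq_sym)
  qed
qed


lemma CM_CM: "concat (map F (concat (map G xs))) = concat (map (\<lambda>p. concat (map F (G p))) xs)"
  by (induction xs) auto

lemma wd_Nx: fixes a' :: 'a shows "wd rel2 (\<lambda>p. fsum ((\<lambda>(s,t). map (\<lambda>(y,k). (x, s*y, t*k)) (\<delta> a')) p)) (cspan rel3)"
proof (rule wdL_rel2, goal_cases)
  case (1 s s' t) show ?case by (simp only: prod.case distrib_right) (rule teq_map_add2, rule r3_add2)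
next
  case (2 s t t') show ?case by (simp only: prod.case distrib_right) (rule teq_map_add2, rule r3_add3)
next
  case (3 c s t) show ?case by (simp only: prod.case mult_scaleC_left) (rule ceq_map_scale2, rule r3_sc2)
next
  case (4 c s t) show ?case by (simp only: prod.case mult_scaleC_left) (rule ceq_map_scale2, rule r3_sc3)
qed

lemma ChiCl_per: fixes h :: 'h and a' :: 'a
  shows "teq rel3 (concat (map (\<lambda>(u,v). map (\<lambda>(w,k). (x, u*w, k)) (\<delta> (v * a'))) (\<tau> h)))
                  (map (\<lambda>(y,k). (x, y, h*k)) (\<delta> a'))"
proof -
  let ?Nx = "\<lambda>(s,t). map (\<lambda>(y,k). (x, s*y, t*k)) (\<delta> a')"
  have 1: "teq rel3 (map (\<lambda>(w,k). (x, u*w, k)) (\<delta> (v * a')))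
                    (concat (map (\<lambda>(p,q). map (\<lambda>(y,k). (x, u*p*y, q*k)) (\<delta> a')) (\<delta> v)))" for u v
  proof -
    have "teq rel3 (concat (map (\<lambda>(w,k). [(x, u*w, k)]) (\<delta> (v * a'))))
                   (concat (map (\<lambda>(w,k). [(x, u*w, k)]) [(p * y, q * k). (p, q) \<leftarrow> \<delta> v, (y, k) \<leftarrow> \<delta> a']))"
      by (rule wd_map[OF wd_ChiI[where x=x and u=u] d_mult])
    then show ?thesis by (simp add: CM_map2 map_concat concat_concat' o_def case_prod_unfold mult.assoc)
  qed
  have 2: "teq rel3 (concat (map (\<lambda>(u,v). map (\<lambda>(w,k). (x, u*w, k)) (\<delta> (v * a'))) (\<tau> h)))
                    (concat (map (\<lambda>(u,v). concat (map (\<lambda>(p,q). map (\<lambda>(y,k). (x, u*p*y, q*k)) (\<delta> a')) (\<delta> v))) (\<tau> h)))"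
    by (rule teq_concat) (auto split: prod.splits intro: 1)
  have 3: "concat (map (\<lambda>(u,v). concat (map (\<lambda>(p,q). map (\<lambda>(y,k). (x, u*p*y, q*k)) (\<delta> a')) (\<delta> v))) (\<tau> h))
         = concat (map ?Nx (galois_map \<delta> (\<tau> h)))"
    by (simp add: galois_map_def map_concat concat_concat' o_def case_prod_unfold)
  have 4: "teq rel3 (concat (map ?Nx (galois_map \<delta> (\<tau> h)))) (concat (map ?Nx [(1,h)]))"
    by (rule wd_map[OF wd_Nx tr_eq])
  have 5: "concat (map ?Nx [(1,h)]) = map (\<lambda>(y,k). (x, y, h*k)) (\<delta> a')" by simp
  show ?thesis using teq_trans[OF 2 4[folded 3]] unfolding 5 .
qed

lemma ChiCl: "teq rel3 (concat (map (\<lambda>(x,u,v). map (\<lambda>(w,k). (x, u*w, k)) (\<delta> v)) [(x, u, v * a'). (a, a') \<leftarrow> X, (x, h) \<leftarrow> \<delta> a, (u, v) \<leftarrow> \<tau> h]))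
   [(x, y, h * k). (a, a') \<leftarrow> X, (x, h) \<leftarrow> \<delta> a, (y, k) \<leftarrow> \<delta> a']"
proof -
  have 1: "concat (map (\<lambda>(x,u,v). map (\<lambda>(w,k). (x, u*w, k)) (\<delta> v)) [(x, u, v * a'). (a, a') \<leftarrow> X, (x, h) \<leftarrow> \<delta> a, (u, v) \<leftarrow> \<tau> h])
     = concat (map (\<lambda>(a,a'). concat (map (\<lambda>(x,h). concat (map (\<lambda>(u,v). map (\<lambda>(w,k). (x, u*w, k)) (\<delta> (v * a'))) (\<tau> h))) (\<delta> a))) X)"
    by (simp add: map_concat concat_concat' o_def case_prod_unfold)
  show ?thesis unfolding 1
    by (rule teq_concat) (auto split: prod.splits intro!: teq_concat ChiCl_per)
qed

lemma PsiChi: fixes u :: 'a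
  shows "teq (relB3 Bc) (concat (map (\<lambda>(x,y,h). map (\<lambda>(u,v). (x, y*u, v)) (\<tau> h)) (map (\<lambda>(w,k). (x, u*w, k)) (\<delta> v)))) [(x,u,v)]"
proof -
  have 1: "teq (relB3 Bc) (concat (map (\<lambda>(s,t). [(x, u*s, t)]) (concat (map (\<lambda>(w,k). map (\<lambda>(p,q). (w * p, q)) (\<tau> k)) (\<delta> v)))))
                          (concat (map (\<lambda>(s,t). [(x, u*s, t)]) [(1,v)]))"
    by (rule wd_map[OF wd_PsiI[where x=x and y=u] ident])
  have 2: "concat (map (\<lambda>(s,t). [(x, u*s, t)]) (concat (map (\<lambda>(w,k). map (\<lambda>(p,q). (w * p, q)) (\<tau> k)) (\<delta> v))))
     = concat (map (\<lambda>(x,y,h). map (\<lambda>(u,v). (x, y*u, v)) (\<tau> h)) (map (\<lambda>(w,k). (x, u*w, k)) (\<delta> v)))"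
    by (simp add: map_concat concat_concat' o_def case_prod_unfold mult.assoc)
  show ?thesis using 1 unfolding 2 by simp
qed

lemma C1: "X \<in> C_set \<delta> \<tau> \<Longrightarrow> X \<in> tensor_coinv \<delta>"
proof -
  let ?Chi = "\<lambda>(x,u,v). map (\<lambda>(w,k). (x, u*w, k)) (\<delta> v)"
  let ?Cl = "[(x, u, v * a'). (a, a') \<leftarrow> X, (x, h) \<leftarrow> \<delta> a, (u, v) \<leftarrow> \<tau> h]"
  assume "X \<in> C_set \<delta> \<tau>"
  then have T: "teq (relB3 Bc) ?Cl [(a, a', 1). (a, a') \<leftarrow> X]" by (simp add: C_set_def)
  have 1: "teq rel3 (concat (map ?Chi ?Cl)) (concat (map ?Chi [(a, a', 1). (a, a') \<leftarrow> X]))"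
    by (rule wd_map[OF wd_Chi T])
  have 2: "teq rel3 (concat (map ?Chi [(a, a', 1). (a, a') \<leftarrow> X])) [(a, a', 1). (a, a') \<leftarrow> X]"
  proof -
    have e1: "concat (map ?Chi [(a, a', 1). (a, a') \<leftarrow> X]) = concat (map (\<lambda>(a,a'). concat (map (\<lambda>(w,k). [(a, a'*w, k)]) (\<delta> 1))) X)"
      by (simp add: CM_map2 o_def case_prod_unfold)
    have e2: "teq rel3 (concat (map (\<lambda>(w,k). [(a, a'*w, k)]) (\<delta> 1))) [(a,a',1)]" for a a'
      using wd_map[OF wd_ChiI[where x=a and u=a'] d_one] by simp
    have "teq rel3 (concat (map (\<lambda>(a,a'). concat (map (\<lambda>(w,k). [(a, a'*w, k)]) (\<delta> 1))) X)) (concat (map (\<lambda>(a,a'). [(a,a',1)]) X))"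
      by (rule teq_concat) (auto split: prod.splits intro: e2)
    then show ?thesis unfolding e1 by (simp add: CM_map2)
  qed
  have "teq rel3 [(x, y, h * k). (a, a') \<leftarrow> X, (x, h) \<leftarrow> \<delta> a, (y, k) \<leftarrow> \<delta> a'] [(a, a', 1). (a, a') \<leftarrow> X]"
    using teq_trans[OF teq_sym[OF ChiCl] teq_trans[OF 1 2]] .
  then show ?thesis unfolding tensor_coinv_def mem_Collect_eq .
qed

lemma C2: "X \<in> tensor_coinv \<delta> \<Longrightarrow> X \<in> C_set \<delta> \<tau>"
proof -
  let ?Chi = "\<lambda>(x,u,v). map (\<lambda>(w,k). (x, u*w, k)) (\<delta> v)"
  let ?Psi = "\<lambda>(x,y,h). map (\<lambda>(u,v). (x, y*u, v)) (\<tau> h)"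
  let ?Cl = "[(x, u, v * a'). (a, a') \<leftarrow> X, (x, h) \<leftarrow> \<delta> a, (u, v) \<leftarrow> \<tau> h]"
  let ?K = "[(x, y, h * k). (a, a') \<leftarrow> X, (x, h) \<leftarrow> \<delta> a, (y, k) \<leftarrow> \<delta> a']"
  assume "X \<in> tensor_coinv \<delta>"
  then have T: "teq rel3 ?K [(a, a', 1). (a, a') \<leftarrow> X]" by (simp add: tensor_coinv_def)
  have 1: "teq (relB3 Bc) (concat (map ?Psi ?K)) (concat (map ?Psi [(a, a', 1). (a, a') \<leftarrow> X]))"
    by (rule wd_map[OF wd_Psi T])
  have 2: "teq (relB3 Bc) (concat (map ?Psi [(a, a', 1). (a, a') \<leftarrow> X])) [(a, a', 1). (a, a') \<leftarrow> X]"
  proof -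
    have e1: "concat (map ?Psi [(a, a', 1). (a, a') \<leftarrow> X]) = concat (map (\<lambda>(a,a'). concat (map (\<lambda>(u,v). [(a, a'*u, v)]) (\<tau> 1))) X)"
      by (simp add: CM_map2 o_def case_prod_unfold)
    have e2: "teq (relB3 Bc) (concat (map (\<lambda>(u,v). [(a, a'*u, v)]) (\<tau> 1))) [(a,a',1)]" for a a'
      using wd_map[OF wd_PsiI[where x=a and y=a'] tau_one] by simp
    have "teq (relB3 Bc) (concat (map (\<lambda>(a,a'). concat (map (\<lambda>(u,v). [(a, a'*u, v)]) (\<tau> 1))) X)) (concat (map (\<lambda>(a,a'). [(a,a',1)]) X))"
      by (rule teq_concat) (auto split: prod.splits intro: e2)
    then show ?thesis unfolding e1 by (simp add: CM_map2)
  qed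
  have 3: "teq (relB3 Bc) (concat (map ?Psi (concat (map ?Chi ?Cl)))) (concat (map ?Psi ?K))"
    by (rule wd_map[OF wd_Psi ChiCl])
  have 4: "teq (relB3 Bc) (concat (map ?Psi (concat (map ?Chi ?Cl)))) ?Cl"
  proof -
    have "teq (relB3 Bc) (concat (map (\<lambda>p. concat (map ?Psi (?Chi p))) ?Cl)) (concat (map (\<lambda>p. [p]) ?Cl))"
    proof (rule teq_concat)
      fix p :: "'a \<times> 'a \<times> 'a"
      obtain x u v where p: "p = (x,u,v)" by (cases p)
      show "teq (relB3 Bc) (concat (map ?Psi (?Chi p))) [p]" unfolding p prod.case by (rule PsiChi)
    qed
    then show ?thesis by (simp only: CM_CM) simp
  qed
  have "teq (relB3 Bc) ?Cl [(a, a', 1). (a, a') \<leftarrow> X]"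
    using teq_trans[OF teq_sym[OF 4] teq_trans[OF 3 teq_trans[OF 1 2]]] .
  then show ?thesis unfolding C_set_def mem_Collect_eq .
qed

end


theorem lemma3p3:
  fixes \<Delta> :: "'h::complex_algebra_1 \<Rightarrow> ('h \<times> 'h) list"
    and \<epsilon> :: "'h \<Rightarrow> complex"
    and S Sinv :: "'h \<Rightarrow> 'h"
    and \<delta> :: "'a::complex_algebra_1 \<Rightarrow> ('a \<times> 'h) list"
    and \<tau> :: "'h \<Rightarrow> ('a \<times> 'a) list"
  assumes "hopf_algebra \<Delta> \<epsilon> S"
    and "\<forall>h. S (Sinv h) = h \<and> Sinv (S h) = h"
    and "comodule_algebra \<Delta> \<epsilon> \<delta>"
    and "hopf_galois \<delta>"
    and "translation_map \<delta> \<tau>"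
  shows "cotensor \<delta> Sinv = tensor_coinv \<delta> \<and> tensor_coinv \<delta> = C_set \<delta> \<tau>"
proof -
  interpret HG \<Delta> \<epsilon> S Sinv \<delta> \<tau>
    by (rule HG.intro) (rule assms)+
  show ?thesis using B1 B2 C1 C2 by blast
qed

end
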